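(* Let $L=1$ and let $\gamma,\theta,\zeta,\mu_1$ be generic complex parameters. Any solution $Z:\mathbb{C}\to\mathbb{C}$ of the functional equation \[ M_0(\lambda_0;\lambda_1)\,Z(\lambda_1)+M_1(\lambda_0;\lambda_1)\,Z(\lambda_0)=0\qquad\text{for generic }\lambda_0,\lambda_1, \] with $M_0,M_1$ as in the context (for $L=1$), can be written as \[ Z(\lambda)=\Omega_1\,[\gamma,\,\zeta+\mu_1]\,\frac{[\theta+\zeta-\mu_1,\,\theta+\gamma]}{[\theta+\zeta+\lambda,\,\theta]}\,[2\lambda]=\Omega_1\,[\gamma]\,\frac{[2\lambda]}{[2\lambda+\gamma]}\,m_1(\lambda) \] for some $\Omega_1$ not depending on $\lambda$, where \[ m_1(z)=[z+\zeta]\frac{[\theta+\zeta-z,\,\theta+\gamma+z-\mu_1]}{[\theta+\zeta+z,\,\theta]}[z+\mu_1+\gamma]-[z-\zeta+\gamma]\frac{[\theta+\zeta+z+\gamma,\,\theta-z-\mu_1]}{[\theta+\zeta+z,\,\theta]}[z-\mu_1]. \] Moreover, when $\Omega_1=\frac{[\theta-\gamma]}{[\theta+\gamma]}\cdot\frac{[\zeta-\mu_1,\,\theta+\zeta+\mu_1]}{[\zeta+\mu_1,\,\theta+\zeta-\mu_1]}$, $Z$ equals the partition function $\mathcal{Z}(\lambda)=\langle\bar0|\mathcal{B}(\lambda)|0\rangle$ for $L=1$.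
   Context: Fix $\tau\in\mathbb{C}$ with $\operatorname{Im}\tau>0$, let $f(\lambda)=\sum_{n\ge0}(-1)^n e^{\mathrm{i}n(n+1)\pi\tau}\sinh((2n+1)\lambda)$, and write $[x]:=f(x)$, $[x_1,\dots,x_k]:=f(x_1)\cdots f(x_k)$. For $L=1$ define $\Lambda_{\mathcal A}(\lambda)=[\zeta+\lambda]\frac{[\theta+\zeta-\lambda]}{[\theta+\zeta+\lambda]}[\lambda-\mu_1+\gamma,\lambda+\mu_1+\gamma]$, $\Lambda_{\tilde{\mathcal D}}(\lambda)=[\zeta-\lambda-\gamma]\frac{[2\lambda,\theta+\zeta+\lambda+\gamma,\theta-\gamma]}{[2\lambda+\gamma,\theta+\zeta+\lambda,\theta]}[\lambda-\mu_1,\lambda+\mu_1]$, $\bar\Lambda_{\mathcal A}(\lambda)=[\zeta-\lambda]\frac{[\gamma,\theta-2\lambda]}{[2\lambda+\gamma,\theta]}[\lambda-\mu_1+\gamma,\lambda+\mu_1+\gamma]+[\zeta+\lambda+\gamma]\frac{[2\lambda,\theta+\zeta-\lambda-\gamma,\theta+\gamma]}{[2\lambda+\gamma,\theta+\zeta+\lambda,\theta]}[\lambda-\mu_1,\lambda+\mu_1]$, $M_0(\lambda_0;\lambda_1)=\bar\Lambda_{\mathcal A}(\lambda_0)-\Lambda_{\mathcal A}(\lambda_0)\frac{[\lambda_1-\lambda_0+\gamma,\lambda_1+\lambda_0]}{[\lambda_1-\lambda_0,\lambda_1+\lambda_0+\gamma]}$, $M_1(\lambda_0;\lambda_1)=\frac{[2\lambda_1,\gamma,\theta+\lambda_1-\lambda_0]}{[2\lambda_1+\gamma,\lambda_1-\lambda_0,\theta]}\Lambda_{\mathcal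 A}(\lambda_1)+\frac{[\gamma,\theta-\gamma-\lambda_1-\lambda_0,\theta]}{[\lambda_1+\lambda_0+\gamma,\theta,\theta-\gamma]}\Lambda_{\tilde{\mathcal D}}(\lambda_1)$. Partition function for $L=1$: let $V=\mathbb{C}^2$ with basis $e_\pm$; $R(\lambda,\theta)\in\mathrm{End}(V\otimes V)$ has matrix $\begin{pmatrix}a_+&0&0&0\\0&b_+&c_+&0\\0&c_-&b_-&0\\0&0&0&a_-\end{pmatrix}$ in the ordered basis $(e_+\otimes e_+,e_+\otimes e_-,e_-\otimes e_+,e_-\otimes e_-)$ with $a_\pm=[\lambda+\gamma]$, $b_\pm=[\lambda][\theta\mp\gamma]/[\theta]$, $c_\pm=[\theta\mp\lambda][\gamma]/[\theta]$. On $V_0\otimes V_1$ (copies of $V$) let $T_0(\lambda)=R_{01}(\lambda-\mu_1,\theta)$, $\bar T_0(\lambda)=R_{10}(\lambda+\mu_1,\theta)$ ($R_{10}$ = $R$ acting on $V_1\otimes V_0$ with first leg $V_1$), $K_0(\lambda)=\mathrm{diag}([\zeta+\lambda][\theta+\zeta-\lambda]/[\theta+\zeta+\lambda],[\zeta-\lambda])$ on $V_0$, $\mathcal{T}_0(\lambda)=T_0K_0\bar T_0$, and $\mathcal{B}(\lambda)\in\mathrm{End}(V_1)$ defined by $\mathcal{T}_0(\lambda)(e_-\otimes w)=e_+\otimes\mathcal{B}(\lambda)w+e_-\otimes(\cdots)$. Then $\langle\bar0|\mathcal{B}(\lambda)|0\rangle$ denotes the $e_-$-coefficient of $\mathcal{B}(\lambda)e_+$.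 *)

theory Defs
  imports "HOL-Analysis.Analysis"
begin

definition br :: "complex \<Rightarrow> complex \<Rightarrow> complex" where
  "br tau x = (\<Sum>n. (-1)^n * exp (\<i> * of_nat (n * (n + 1)) * of_real pi * tau)
                      * sinh (of_nat (2 * n + 1) * x))"

definition LamA :: "complex \<Rightarrow> complex \<Rightarrow> complex \<Rightarrow> complex \<Rightarrow> complex \<Rightarrow> complex \<Rightarrow> complex" where
  "LamA tau g th ze mu l =
     br tau (ze + l) * br tau (th + ze - l) / br tau (th + ze + l)
     * (br tau (l - mu + g) * br tau (l + mu + g))"

definition LamDt :: "complex \<Rightarrow> complex \<Rightarrow> complex \<Rightarrow> complex \<Rightarrow> complex \<Rightarrow> complex \<Rightarrow> complex" where
  "LamDt tau g th ze mu l =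
     br tau (ze - l - g)
     * ((br tau (2 * l) * br tau (th + ze + l + g) * br tau (th - g))
        / (br tau (2 * l + g) * br tau (th + ze + l) * br tau th))
     * (br tau (l - mu) * br tau (l + mu))"

definition LamAbar :: "complex \<Rightarrow> complex \<Rightarrow> complex \<Rightarrow> complex \<Rightarrow> complex \<Rightarrow> complex \<Rightarrow> complex" where
  "LamAbar tau g th ze mu l =
     br tau (ze - l) * ((br tau g * br tau (th - 2 * l)) / (br tau (2 * l + g) * br tau th))
       * (br tau (l - mu + g) * br tau (l + mu + g))
   + br tau (ze + l + g)
       * ((br tau (2 * l) * br tau (th + ze - l - g) * br tau (th + g))
          / (br tau (2 * l + g) * br tau (th + ze + l) * br tau th))
       * (br tau (l - mu) * br tau (l + mu))"

definition M0 :: "complex \<Rightarrow> complex \<Rightarrow> complex \<Rightarrow> complex \<Rightarrow> complex \<Rightarrow> complex \<Rightarrow> complex \<Rightarrow> complex" where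
  "M0 tau g th ze mu l0 l1 =
     LamAbar tau g th ze mu l0
     - LamA tau g th ze mu l0 * ((br tau (l1 - l0 + g) * br tau (l1 + l0))
                                 / (br tau (l1 - l0) * br tau (l1 + l0 + g)))"

definition M1 :: "complex \<Rightarrow> complex \<Rightarrow> complex \<Rightarrow> complex \<Rightarrow> complex \<Rightarrow> complex \<Rightarrow> complex \<Rightarrow> complex" where
  "M1 tau g th ze mu l0 l1 =
     ((br tau (2 * l1) * br tau g * br tau (th + l1 - l0))
        / (br tau (2 * l1 + g) * br tau (l1 - l0) * br tau th)) * LamA tau g th ze mu l1
   + ((br tau g * br tau (th - g - l1 - l0) * br tau th)
        / (br tau (l1 + l0 + g) * br tau th * br tau (th - g))) * LamDt tau g th ze mu l1"

definition m1 :: "complex \<Rightarrow> complex \<Rightarrow> complex \<Rightarrow> complex \<Rightarrow> complex \<Rightarrow> complex \<Rightarrow> complex" where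
  "m1 tau g th ze mu z =
     br tau (z + ze) * ((br tau (th + ze - z) * br tau (th + g + z - mu))
                        / (br tau (th + ze + z) * br tau th)) * br tau (z + mu + g)
   - br tau (z - ze + g) * ((br tau (th + ze + z + g) * br tau (th - z - mu))
                        / (br tau (th + ze + z) * br tau th)) * br tau (z - mu)"

text \<open>Partition function for L = 1. Basis of V: True = e_+, False = e_-.
  Operators on V0 (x) V1 are functions on index pairs (s0, s1): entry (row, column).\<close>

definition Rmat :: "complex \<Rightarrow> complex \<Rightarrow> complex \<Rightarrow> complex
                     \<Rightarrow> bool \<times> bool \<Rightarrow> bool \<times> bool \<Rightarrow> complex" where
  "Rmat tau g th l = (\<lambda>(a, b) (c, d).
     if (a, b) = (c, d) then
       (if a = b then br tau (l + g)
        else if a then br tau l * br tau (th - g) / br tau th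
        else br tau l * br tau (th + g) / br tau th)
     else if a \<noteq> b \<and> c = b \<and> d = a then
       (if a then br tau (th - l) * br tau g / br tau th
        else br tau (th + l) * br tau g / br tau th)
     else 0)"

definition mmul :: "(bool \<times> bool \<Rightarrow> bool \<times> bool \<Rightarrow> complex)
                   \<Rightarrow> (bool \<times> bool \<Rightarrow> bool \<times> bool \<Rightarrow> complex)
                   \<Rightarrow> bool \<times> bool \<Rightarrow> bool \<times> bool \<Rightarrow> complex" where
  "mmul A B x y = (\<Sum>z\<in>UNIV. A x z * B z y)"

definition T0 :: "complex \<Rightarrow> complex \<Rightarrow> complex \<Rightarrow> complex \<Rightarrow> complex
                  \<Rightarrow> bool \<times> bool \<Rightarrow> bool \<times> bool \<Rightarrow> complex" where
  "T0 tau g th mu l = Rmat tau g th (l - mu)"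

text \<open>R_10: R acting on V1 (x) V0 with first leg V1.\<close>
definition Tbar0 :: "complex \<Rightarrow> complex \<Rightarrow> complex \<Rightarrow> complex \<Rightarrow> complex
                  \<Rightarrow> bool \<times> bool \<Rightarrow> bool \<times> bool \<Rightarrow> complex" where
  "Tbar0 tau g th mu l = (\<lambda>(s0, s1) (t0, t1). Rmat tau g th (l + mu) (s1, s0) (t1, t0))"

definition K0 :: "complex \<Rightarrow> complex \<Rightarrow> complex \<Rightarrow> complex
                  \<Rightarrow> bool \<times> bool \<Rightarrow> bool \<times> bool \<Rightarrow> complex" where
  "K0 tau th ze l = (\<lambda>(s0, s1) (t0, t1).
     if (s0, s1) = (t0, t1) then
       (if s0 then br tau (ze + l) * br tau (th + ze - l) / br tau (th + ze + l)
        else br tau (ze - l))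
     else 0)"

definition DoubleRow :: "complex \<Rightarrow> complex \<Rightarrow> complex \<Rightarrow> complex \<Rightarrow> complex \<Rightarrow> complex
                  \<Rightarrow> bool \<times> bool \<Rightarrow> bool \<times> bool \<Rightarrow> complex" where
  "DoubleRow tau g th ze mu l =
     mmul (mmul (T0 tau g th mu l) (K0 tau th ze l)) (Tbar0 tau g th mu l)"

text \<open>B(l) w = V0-component along e_+ of T(l)(e_- (x) w); the partition function is the
  e_- coefficient of B(l) e_+, i.e. the entry at row (e_+, e_-), column (e_-, e_+).\<close>
definition PartFun :: "complex \<Rightarrow> complex \<Rightarrow> complex \<Rightarrow> complex \<Rightarrow> complex \<Rightarrow> complex \<Rightarrow> complex" where
  "PartFun tau g th ze mu l = DoubleRow tau g th ze mu l (True, False) (False, True)"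

end

theory Submission
  imports Defs "HOL-Complex_Analysis.Complex_Analysis"
begin


lemma exp_negabs_summable: "(\<lambda>n::int. exp (- real_of_int \<bar>n\<bar>)) summable_on UNIV"
proof -
  have g: "(\<lambda>k::nat. exp (- real k)) summable_on UNIV"
  proof (rule summable_nonneg_imp_summable_on)
    have "(\<lambda>k::nat. exp (- real k)) = (\<lambda>k. (exp (-1)) ^ k)"
      by (auto simp: exp_of_nat_mult[symmetric])
    then show "summable (\<lambda>k::nat. exp (- real k))" by (simp add: summable_geometric)
  qed auto
  have U: "(UNIV::int set) = int ` UNIV \<union> (\<lambda>k. - int (Suc k)) ` UNIV"
  proof -
    { fix n :: int
      have "n \<in> int ` UNIV \<union> (\<lambda>k. - int (Suc k)) ` UNIV"
      proof (cases "n \<ge> 0")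
        case True then show ?thesis by (metis UnI1 nonneg_int_cases rangeI)
      next
        case False then have "n = - int (Suc (nat (-n - 1)))" by auto
        then show ?thesis by blast
      qed }
    then show ?thesis by auto
  qed
  have s1: "(\<lambda>n::int. exp (- real_of_int \<bar>n\<bar>)) summable_on int ` UNIV"
    by (subst summable_on_reindex) (auto simp: o_def g)
  have s2: "(\<lambda>n::int. exp (- real_of_int \<bar>n\<bar>)) summable_on (\<lambda>k. - int (Suc k)) ` UNIV"
  proof (subst summable_on_reindex)
    show "inj_on (\<lambda>k. - int (Suc k)) UNIV" by (auto simp: inj_on_def)
    have "(\<lambda>k::nat. exp (- real (Suc k))) summable_on UNIV"
    proof -
      have "(\<lambda>k::nat. exp (-1) * exp (- real k)) summable_on UNIV"
        using g by (rule summable_on_cmult_right)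
      moreover have "(\<lambda>k::nat. exp (-1) * exp (- real k)) = (\<lambda>k::nat. exp (- real (Suc k)))"
        by (auto simp: exp_add[symmetric] algebra_simps)
      ultimately show ?thesis by simp
    qed
    then show "((\<lambda>n::int. exp (- real_of_int \<bar>n\<bar>)) \<circ> (\<lambda>k. - int (Suc k))) summable_on UNIV"
      by (simp add: o_def algebra_simps)
  qed
  show ?thesis
    by (subst U) (rule summable_on_union[OF s1 s2])
qed

lemma gauss_summable:
  fixes s K :: real
  assumes s: "s > 0"
  shows "(\<lambda>n::int. exp (- s * real_of_int n ^ 2 + K * real_of_int \<bar>n\<bar>)) summable_on UNIV"
proof -
  define Cst where "Cst = (K + 1)^2 / (4 * s)"
  have le: "- s * t ^ 2 + K * t \<le> Cst - t" for t :: real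
  proof -
    have "0 \<le> s * (t - (K + 1) / (2 * s))^2" using s by simp
    also have "\<dots> = s * t^2 - (K + 1) * t + (K + 1)^2 / (4 * s)"
      using s by (simp add: power2_eq_square field_simps)
    finally show ?thesis unfolding Cst_def by (simp add: algebra_simps)
  qed
  have "(\<lambda>n::int. exp Cst * exp (- real_of_int \<bar>n\<bar>)) summable_on UNIV"
    by (rule summable_on_cmult_right[OF exp_negabs_summable])
  then show ?thesis
  proof (rule summable_on_comparison_test)
    fix n :: int
    have "- s * real_of_int n ^ 2 + K * real_of_int \<bar>n\<bar> \<le> Cst - real_of_int \<bar>n\<bar>"
      using le[of "real_of_int \<bar>n\<bar>"] by simp
    then show "exp (- s * real_of_int n ^ 2 + K * real_of_int \<bar>n\<bar>) \<le> exp Cst * exp (- real_of_int \<bar>n\<bar>)"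
      by (simp add: exp_add[symmetric])
  qed auto
qed

definition cc :: "complex \<Rightarrow> int \<Rightarrow> complex" where
  "cc tau n = (if even n then 1 else -1) * exp (\<i> * of_int (n*(n+1)) * of_real pi * tau)"

definition TT :: "complex \<Rightarrow> complex \<Rightarrow> int \<Rightarrow> complex" where
  "TT tau x n = cc tau n * exp (of_int (2*n+1) * x)"

definition Th :: "complex \<Rightarrow> complex \<Rightarrow> complex" where
  "Th tau x = (\<Sum>\<^sub>\<infinity>n. TT tau x n)"

lemma norm_exp_iq: "norm (exp (\<i> * of_int m * of_real pi * tau)) = exp (- pi * Im tau * real_of_int m)"
  by (simp add: norm_exp_eq_Re)

lemma norm_cc: "norm (cc tau n) = exp (- pi * Im tau * real_of_int (n*(n+1)))"
  unfolding cc_def by (simp add: norm_mult norm_exp_iq del: of_int_mult)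

definition MM :: "complex \<Rightarrow> real \<Rightarrow> int \<Rightarrow> real" where
  "MM tau R n = exp (- pi * Im tau * real_of_int (n*(n+1)) + real_of_int \<bar>2*n+1\<bar> * R)"

lemma norm_TT_le:
  assumes "norm x \<le> R"
  shows "norm (TT tau x n) \<le> MM tau R n"
proof -
  have "norm (exp (of_int (2*n+1) * x)) = exp (real_of_int (2*n+1) * Re x)"
    by (simp add: norm_exp_eq_Re)
  also have "\<dots> \<le> exp (real_of_int \<bar>2*n+1\<bar> * R)"
  proof -
    have "real_of_int (2*n+1) * Re x \<le> \<bar>real_of_int (2*n+1) * Re x\<bar>" by simp
    also have "\<dots> = real_of_int \<bar>2*n+1\<bar> * \<bar>Re x\<bar>" by (simp add: abs_mult)
    also have "\<dots> \<le> real_of_int \<bar>2*n+1\<bar> * R"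
      using assms abs_Re_le_cmod[of x] by (intro mult_left_mono) auto
    finally show ?thesis by simp
  qed
  finally show ?thesis
    unfolding TT_def MM_def norm_mult norm_cc exp_add
    by (intro mult_left_mono) auto
qed

lemma MM_summable:
  assumes "Im tau > 0"
  shows "MM tau R summable_on UNIV"
proof -
  define s where "s = pi * Im tau"
  have s: "s > 0" using assms by (simp add: s_def)
  have "(\<lambda>n::int. exp \<bar>R\<bar> * exp (- s * real_of_int n ^ 2 + (s + 2*\<bar>R\<bar>) * real_of_int \<bar>n\<bar>)) summable_on UNIV"
    by (rule summable_on_cmult_right[OF gauss_summable[OF s]])
  then show ?thesis
  proof (rule summable_on_comparison_test)
    fix n :: int
    have a: "- s * real_of_int (n*(n+1)) \<le> - s * real_of_int n ^ 2 + s * real_of_int \<bar>n\<bar>"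
    proof -
      have "- s * real_of_int (n*(n+1)) = - s * real_of_int n ^ 2 - s * real_of_int n"
        by (simp add: algebra_simps power2_eq_square)
      moreover have "- s * real_of_int n \<le> s * real_of_int \<bar>n\<bar>"
      proof -
        have "- real_of_int n \<le> real_of_int \<bar>n\<bar>" by simp
        from mult_left_mono[OF this, of s] s show ?thesis by simp
      qed
      ultimately show ?thesis by linarith
    qed
    have b: "real_of_int \<bar>2*n+1\<bar> * R \<le> \<bar>R\<bar> + 2 * \<bar>R\<bar> * real_of_int \<bar>n\<bar>"
    proof -
      have "real_of_int \<bar>2*n+1\<bar> * R \<le> real_of_int \<bar>2*n+1\<bar> * \<bar>R\<bar>"
        by (intro mult_left_mono) auto
      also have "\<dots> \<le> (2 * real_of_int \<bar>n\<bar> + 1) * \<bar>R\<bar>"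
        by (intro mult_right_mono) auto
      finally show ?thesis by (simp add: algebra_simps)
    qed
    have key: "- pi * Im tau * real_of_int (n*(n+1)) + real_of_int \<bar>2*n+1\<bar> * R \<le> \<bar>R\<bar> + (- s * real_of_int n ^ 2 + (s + 2*\<bar>R\<bar>) * real_of_int \<bar>n\<bar>)"
      using a b unfolding s_def by (simp add: algebra_simps)
    show "MM tau R n \<le> exp \<bar>R\<bar> * exp (- s * real_of_int n ^ 2 + (s + 2*\<bar>R\<bar>) * real_of_int \<bar>n\<bar>)"
      unfolding MM_def exp_add[symmetric] using key by simp
  qed (simp add: MM_def)
qed

lemma TT_abs_summable:
  assumes "Im tau > 0"
  shows "(\<lambda>n. norm (TT tau x n)) summable_on UNIV"
  by (rule summable_on_comparison_test[OF MM_summable[OF assms, of "norm x"]])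
     (auto intro: norm_TT_le)

lemma TT_summable:
  assumes "Im tau > 0"
  shows "TT tau x summable_on UNIV"
  using TT_abs_summable[OF assms] abs_summable_summable by blast

lemma Th_holomorphic:
  assumes "Im tau > 0"
  shows "Th tau holomorphic_on UNIV"
proof -
  have "Th tau holomorphic_on ball z 1" for z
  proof -
    have ul: "uniform_limit (cball z 1) (\<lambda>F x. \<Sum>n\<in>F. TT tau x n) (Th tau) (finite_subsets_at_top UNIV)"
      unfolding Th_def
    proof (rule Weierstrass_m_test_general[where M="MM tau (norm z + 1)"])
      fix n x assume "x \<in> cball z (1::real)"
      then have "norm x \<le> norm z + 1"
        by (metis dist_norm mem_cball norm_minus_commute norm_triangle_sub order_trans add_le_cancel_left)
      then show "norm (TT tau x n) \<le> MM tau (norm z + 1) n" by (rule norm_TT_le)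
    qed (rule MM_summable[OF assms])
    have "\<forall>\<^sub>F F in finite_subsets_at_top UNIV. continuous_on (cball z 1) (\<lambda>x. \<Sum>n\<in>F. TT tau x n) \<and> (\<lambda>x. \<Sum>n\<in>F. TT tau x n) holomorphic_on ball z 1"
      unfolding TT_def by (intro always_eventually allI conjI) (auto intro!: continuous_intros holomorphic_intros)
    from holomorphic_uniform_limit[OF this ul] show ?thesis by auto
  qed
  then show ?thesis
    by (meson UNIV_I centre_in_ball holomorphic_on_def holomorphic_on_imp_differentiable_at open_ball zero_less_one field_differentiable_at_within)
qed




lemma UNIV_int_split: "(UNIV::int set) = int ` UNIV \<union> (\<lambda>k. - int (Suc k)) ` UNIV"
proof -
  { fix n :: int
    have "n \<in> int ` UNIV \<union> (\<lambda>k. - int (Suc k)) ` UNIV"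
    proof (cases "n \<ge> 0")
      case True then show ?thesis by (metis UnI1 nonneg_int_cases rangeI)
    next
      case False then have "n = - int (Suc (nat (-n - 1)))" by auto
      then show ?thesis by blast
    qed }
  then show ?thesis by auto
qed

lemma UNIV_int_split_disj: "int ` UNIV \<inter> (\<lambda>k. - int (Suc k)) ` UNIV = {}"
  by auto

lemma cc_pos: "cc tau (int k) = (-1)^k * exp (\<i> * of_nat (k*(k+1)) * of_real pi * tau)"
proof -
  have "(if even (int k) then 1 else -1) = ((-1::complex)^k)" by simp
  moreover have "(of_int (int k * (int k + 1)) :: complex) = of_nat (k*(k+1))" by (simp add: algebra_simps)
  ultimately show ?thesis unfolding cc_def by simp
qed

lemma cc_neg: "cc tau (- int (Suc k)) = - ((-1)^k * exp (\<i> * of_nat (k*(k+1)) * of_real pi * tau))"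
proof -
  have "(if even (- int (Suc k)) then 1 else -1) = - ((-1::complex)^k)" by simp
  moreover have "(of_int (- int (Suc k) * (- int (Suc k) + 1)) :: complex) = of_nat (k*(k+1))"
    by (simp add: algebra_simps)
  ultimately show ?thesis unfolding cc_def by simp
qed

lemma br_sums:
  assumes "Im tau > 0"
  shows "(\<lambda>k. (-1)^k * exp (\<i> * of_nat (k*(k+1)) * of_real pi * tau) * sinh (of_nat (2*k+1) * x)) sums (Th tau x / 2)"
proof -
  define A where "A = int ` (UNIV::nat set)"
  define B where "B = (\<lambda>k. - int (Suc k)) ` (UNIV::nat set)"
  have sA: "TT tau x summable_on A" by (rule summable_on_subset_banach[OF TT_summable[OF assms]]) auto
  have sB: "TT tau x summable_on B" by (rule summable_on_subset_banach[OF TT_summable[OF assms]]) auto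
  have Th: "Th tau x = infsum (TT tau x) A + infsum (TT tau x) B"
    unfolding Th_def A_def B_def by (subst UNIV_int_split) (rule infsum_Un_disjoint[OF sA[unfolded A_def] sB[unfolded B_def] UNIV_int_split_disj])
  have hA: "((\<lambda>k. TT tau x (int k)) has_sum infsum (TT tau x) A) UNIV"
    using has_sum_reindex[of int UNIV "TT tau x"] has_sum_infsum[OF sA] unfolding A_def by (simp add: o_def)
  have hB: "((\<lambda>k. TT tau x (- int (Suc k))) has_sum infsum (TT tau x) B) UNIV"
    using has_sum_reindex[of "\<lambda>k. - int (Suc k)" UNIV "TT tau x"] has_sum_infsum[OF sB] unfolding B_def
    by (simp add: o_def inj_on_def)
  have h: "((\<lambda>k. (TT tau x (int k) + TT tau x (- int (Suc k))) / 2) has_sum Th tau x / 2) UNIV"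
    unfolding Th by (intro has_sum_divide_const has_sum_add hA hB)
  have trm: "(TT tau x (int k) + TT tau x (- int (Suc k))) / 2
     = (-1)^k * exp (\<i> * of_nat (k*(k+1)) * of_real pi * tau) * sinh (of_nat (2*k+1) * x)" for k
  proof -
    have e: "(of_int (2 * - int (Suc k) + 1) :: complex) = - of_nat (2*k+1)" by simp
    show ?thesis unfolding TT_def cc_pos cc_neg e sinh_def
      by (simp add: scaleR_conv_of_real field_simps)
  qed
  from h show ?thesis
    unfolding trm by (rule has_sum_imp_sums)
qed

lemma br_Th:
  assumes "Im tau > 0"
  shows "br tau x = Th tau x / 2"
  using br_sums[OF assms, of x] unfolding br_def by (simp add: sums_unique[symmetric] mult.assoc)





lemma has_sum_prod_UNIV:
  fixes f g :: "int \<Rightarrow> complex"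
  assumes f: "(\<lambda>m. norm (f m)) summable_on UNIV" and g: "(\<lambda>n. norm (g n)) summable_on UNIV"
  shows "((\<lambda>(m,n). f m * g n) has_sum (infsum f UNIV * infsum g UNIV)) UNIV"
proof -
  have fs: "f summable_on UNIV" using f abs_summable_summable by blast
  have gs: "g summable_on UNIV" using g abs_summable_summable by blast
  have inner: "((\<lambda>n. f m * g n) has_sum f m * infsum g UNIV) UNIV" for m
    by (rule has_sum_cmult_right[OF has_sum_infsum[OF gs]])
  have outer: "((\<lambda>m. f m * infsum g UNIV) has_sum infsum f UNIV * infsum g UNIV) UNIV"
    by (rule has_sum_cmult_left[OF has_sum_infsum[OF fs]])
  have abs: "(\<lambda>p. norm ((\<lambda>(m,n). f m * g n) p)) summable_on Sigma UNIV (\<lambda>_. UNIV)"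
  proof (subst Infinite_Sum.abs_summable_on_Sigma_iff, intro conjI ballI)
    fix m :: int
    show "(\<lambda>n. norm ((\<lambda>(m,n). f m * g n) (m, n))) summable_on UNIV"
      using summable_on_cmult_right[OF g, of "norm (f m)"] by (simp add: norm_mult)
  next
    have "(\<lambda>m. norm (f m) * infsum (\<lambda>n. norm (g n)) UNIV) summable_on UNIV"
      by (rule summable_on_cmult_left[OF f])
    moreover have "infsum (\<lambda>n. norm ((\<lambda>(m,n). f m * g n) (m, n))) UNIV = norm (f m) * infsum (\<lambda>n. norm (g n)) UNIV" for m
      by (simp add: norm_mult infsum_cmult_right')
    ultimately show "(\<lambda>m. norm (infsum (\<lambda>n. norm ((\<lambda>(m,n). f m * g n) (m, n))) UNIV)) summable_on UNIV"
      by (simp add: infsum_nonneg)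
  qed
  have "((\<lambda>(m,n). f m * g n) has_sum (infsum f UNIV * infsum g UNIV)) (Sigma UNIV (\<lambda>_. UNIV))"
    by (rule has_sum_SigmaI[where g="\<lambda>m. f m * infsum g UNIV"])
       (use inner outer abs_summable_summable[OF abs] in auto)
  then show ?thesis by simp
qed

definition oterm :: "complex \<Rightarrow> complex \<Rightarrow> int \<Rightarrow> complex" where
  "oterm tau x k = exp (\<i> * of_int (2*k*(k+1)) * of_real pi * tau) * exp (of_int (2*(2*k+1)) * x)"
definition eterm :: "complex \<Rightarrow> complex \<Rightarrow> int \<Rightarrow> complex" where
  "eterm tau x k = exp (\<i> * of_int (2*k*k) * of_real pi * tau) * exp (of_int (4*k) * x)"
definition Oth where "Oth tau x = infsum (oterm tau x) UNIV"
definition Eth where "Eth tau x = infsum (eterm tau x) UNIV"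

lemma oterm_TT: "oterm tau x k = (if even k then 1 else -1) * TT (2*tau) (2*x) k"
proof -
  have "(if even k then 1 else -1) * ((if even k then 1 else -1) :: complex) = 1" by simp
  moreover have "exp (\<i> * of_int (2*k*(k+1)) * of_real pi * tau) = exp (\<i> * of_int (k*(k+1)) * of_real pi * (2*tau))"
    by (simp add: algebra_simps)
  moreover have "exp (of_int (2*(2*k+1)) * x) = exp (of_int (2*k+1) * (2*x))"
    by (simp add: algebra_simps)
  ultimately show ?thesis unfolding oterm_def TT_def cc_def
    by (metis (no_types, lifting) mult.assoc mult_1)
qed

lemma oterm_abs_summable:
  assumes "Im tau > 0"
  shows "(\<lambda>k. norm (oterm tau x k)) summable_on UNIV"
proof -
  have i2: "Im (2*tau) > 0" using assms by simp
  have "norm (oterm tau x k) = norm (TT (2*tau) (2*x) k)" for k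
    by (auto simp: oterm_TT norm_mult)
  with TT_abs_summable[OF i2, of "2*x"] show ?thesis
    by simp
qed

lemma eterm_abs_summable:
  assumes "Im tau > 0"
  shows "(\<lambda>k. norm (eterm tau x k)) summable_on UNIV"
proof -
  have s: "2 * pi * Im tau > 0" using assms by simp
  show ?thesis
  proof (rule summable_on_comparison_test[OF gauss_summable[OF s, of "4 * norm x"]])
    fix k :: int
    have "real_of_int (4*k) * Re x \<le> 4 * norm x * real_of_int \<bar>k\<bar>"
    proof -
      have "real_of_int (4*k) * Re x \<le> \<bar>real_of_int (4*k) * Re x\<bar>" by simp
      also have "\<dots> = 4 * real_of_int \<bar>k\<bar> * \<bar>Re x\<bar>" by (simp add: abs_mult)
      also have "\<dots> \<le> 4 * real_of_int \<bar>k\<bar> * norm x"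
        using abs_Re_le_cmod[of x] by (intro mult_left_mono) auto
      finally show ?thesis by (simp add: algebra_simps)
    qed
    then show "norm (eterm tau x k) \<le> exp (- (2 * pi * Im tau) * real_of_int k ^ 2 + 4 * norm x * real_of_int \<bar>k\<bar>)"
      unfolding eterm_def norm_mult norm_exp_eq_Re exp_add[symmetric]
      by (simp add: power2_eq_square algebra_simps)
  qed auto
qed

lemma prod_term1:
  "TT tau (x+y) (k+l) * TT tau (x-y) (k-l) = oterm tau x k * eterm tau y l"
proof -
  have s: "(if even (k+l) then 1 else -1) * (if even (k-l) then 1 else (-1::complex)) = 1"
    by auto
  have e1: "\<i> * of_int ((k+l)*((k+l)+1)) * of_real pi * tau + \<i> * of_int ((k-l)*((k-l)+1)) * of_real pi * tau
      = \<i> * of_int (2*k*(k+1)) * of_real pi * tau + \<i> * of_int (2*l*l) * of_real pi * tau"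
    by (simp add: algebra_simps)
  have e2: "of_int (2*(k+l)+1) * (x+y) + of_int (2*(k-l)+1) * (x-y) = of_int (2*(2*k+1)) * x + of_int (4*l) * y"
    by (simp add: algebra_simps)
  have "TT tau (x+y) (k+l) * TT tau (x-y) (k-l) =
     ((if even (k+l) then 1 else -1) * (if even (k-l) then 1 else (-1::complex))) *
     (exp (\<i> * of_int ((k+l)*((k+l)+1)) * of_real pi * tau + \<i> * of_int ((k-l)*((k-l)+1)) * of_real pi * tau) *
      exp (of_int (2*(k+l)+1) * (x+y) + of_int (2*(k-l)+1) * (x-y)))"
    unfolding TT_def cc_def exp_add by (simp only: mult_ac)
  also have "\<dots> = oterm tau x k * eterm tau y l"
    unfolding s e1 e2 oterm_def eterm_def exp_add by (simp only: mult_ac mult_1)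
  finally show ?thesis .
qed

lemma prod_term2:
  "TT tau (x+y) (k+l) * TT tau (x-y) (k-l-1) = - (eterm tau x k * oterm tau y l)"
proof -
  have s: "(if even (k+l) then 1 else -1) * (if even (k-l-1) then 1 else (-1::complex)) = -1"
    by auto
  have e1: "\<i> * of_int ((k+l)*((k+l)+1)) * of_real pi * tau + \<i> * of_int ((k-l-1)*((k-l-1)+1)) * of_real pi * tau
      = \<i> * of_int (2*k*k) * of_real pi * tau + \<i> * of_int (2*l*(l+1)) * of_real pi * tau"
    by (simp add: algebra_simps)
  have e2: "of_int (2*(k+l)+1) * (x+y) + of_int (2*(k-l-1)+1) * (x-y) = of_int (4*k) * x + of_int (2*(2*l+1)) * y"
    by (simp add: algebra_simps)
  have "TT tau (x+y) (k+l) * TT tau (x-y) (k-l-1) =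
     ((if even (k+l) then 1 else -1) * (if even (k-l-1) then 1 else (-1::complex))) *
     (exp (\<i> * of_int ((k+l)*((k+l)+1)) * of_real pi * tau + \<i> * of_int ((k-l-1)*((k-l-1)+1)) * of_real pi * tau) *
      exp (of_int (2*(k+l)+1) * (x+y) + of_int (2*(k-l-1)+1) * (x-y)))"
    unfolding TT_def cc_def exp_add by (simp only: mult_ac)
  also have "\<dots> = - (eterm tau x k * oterm tau y l)"
    unfolding s e1 e2 oterm_def eterm_def exp_add by (simp add: mult_ac)
  finally show ?thesis .
qed




lemma Th_prod:
  assumes tau: "Im tau > 0"
  shows "Th tau (x+y) * Th tau (x-y) = Oth tau x * Eth tau y - Eth tau x * Oth tau y"
proof -
  define P where "P = (\<lambda>(m,n). TT tau (x+y) m * TT tau (x-y) n)"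
  define phi1 where "phi1 = (\<lambda>(k::int,l::int). (k+l, k-l))"
  define phi2 where "phi2 = (\<lambda>(k::int,l::int). (k+l, k-l-1))"
  have hP: "(P has_sum Th tau (x+y) * Th tau (x-y)) UNIV"
    unfolding P_def Th_def by (rule has_sum_prod_UNIV[OF TT_abs_summable[OF tau] TT_abs_summable[OF tau]])
  have sP: "P summable_on UNIV" using hP has_sum_imp_summable by blast
  have inj1: "inj phi1" unfolding phi1_def inj_def by auto
  have inj2: "inj phi2" unfolding phi2_def inj_def by auto
  have disj: "range phi1 \<inter> range phi2 = {}"
  proof -
    { fix a b c d :: int assume "(a+b, a-b) = (c+d, c-d-1)"
      then have False by simp presburger }
    then show ?thesis unfolding phi1_def phi2_def by auto
  qed
  have cover: "range phi1 \<union> range phi2 = UNIV"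
  proof -
    { fix m n :: int
      have "(m,n) \<in> range phi1 \<union> range phi2"
      proof (cases "even (m - n)")
        case True
        then obtain j where j: "m - n = 2*j" unfolding dvd_def by blast
        have "phi1 (n + j, j) = (m,n)" unfolding phi1_def using j by simp
        then show ?thesis by (metis UnI1 rangeI)
      next
        case False
        then obtain j where j: "m - n = 2*j + 1" by (metis oddE)
        have "phi2 (n + j + 1, j) = (m,n)" unfolding phi2_def using j by simp
        then show ?thesis by (metis UnI2 rangeI)
      qed }
    then show ?thesis by auto
  qed
  have s1: "P summable_on range phi1" by (rule summable_on_subset_banach[OF sP]) auto
  have s2: "P summable_on range phi2" by (rule summable_on_subset_banach[OF sP]) auto
  have "Th tau (x+y) * Th tau (x-y) = infsum P UNIV" using hP infsumI by metis
  also have "\<dots> = infsum P (range phi1) + infsum P (range phi2)"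
    by (subst cover[symmetric]) (rule infsum_Un_disjoint[OF s1 s2 disj])
  also have "infsum P (range phi1) = infsum (P \<circ> phi1) UNIV" by (rule infsum_reindex[OF inj1])
  also have "P \<circ> phi1 = (\<lambda>(k,l). oterm tau x k * eterm tau y l)"
    unfolding P_def phi1_def by (auto simp: fun_eq_iff prod_term1)
  also have "infsum (\<lambda>(k,l). oterm tau x k * eterm tau y l) UNIV = Oth tau x * Eth tau y"
    unfolding Oth_def Eth_def
    by (rule infsumI[OF has_sum_prod_UNIV[OF oterm_abs_summable[OF tau] eterm_abs_summable[OF tau]]])
  also have "infsum P (range phi2) = infsum (P \<circ> phi2) UNIV" by (rule infsum_reindex[OF inj2])
  also have "P \<circ> phi2 = (\<lambda>p. - ((\<lambda>(k,l). eterm tau x k * oterm tau y l) p))"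
    unfolding P_def phi2_def by (auto simp: fun_eq_iff prod_term2)
  also have "infsum (\<lambda>p. - ((\<lambda>(k,l). eterm tau x k * oterm tau y l) p)) UNIV = - (Eth tau x * Oth tau y)"
    unfolding infsum_uminus Oth_def Eth_def
    by (subst infsumI[OF has_sum_prod_UNIV[OF eterm_abs_summable[OF tau] oterm_abs_summable[OF tau]]]) simp
  finally show ?thesis by simp
qed

lemma br_prod:
  assumes tau: "Im tau > 0"
  shows "br tau (x+y) * br tau (x-y) = (Oth tau x * Eth tau y - Eth tau x * Oth tau y) / 4"
  using Th_prod[OF tau, of x y] by (simp add: br_Th[OF tau])

lemma br_W:
  assumes tau: "Im tau > 0"
  shows "br tau (x+y) * br tau (x-y) * br tau (u+v) * br tau (u-v)
       = br tau (x+u) * br tau (x-u) * br tau (y+v) * br tau (y-v)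
       - br tau (x+v) * br tau (x-v) * br tau (y+u) * br tau (y-u)"
proof -
  have "br tau (x+y) * br tau (x-y) * br tau (u+v) * br tau (u-v) = (br tau (x+y) * br tau (x-y)) * (br tau (u+v) * br tau (u-v))"
    by (simp only: mult.assoc)
  moreover have "br tau (x+u) * br tau (x-u) * br tau (y+v) * br tau (y-v) = (br tau (x+u) * br tau (x-u)) * (br tau (y+v) * br tau (y-v))"
    by (simp only: mult.assoc)
  moreover have "br tau (x+v) * br tau (x-v) * br tau (y+u) * br tau (y-u) = (br tau (x+v) * br tau (x-v)) * (br tau (y+u) * br tau (y-u))"
    by (simp only: mult.assoc)
  ultimately show ?thesis unfolding br_prod[OF tau] by (simp add: field_simps) algebra
qed

lemma br_odd:
  assumes tau: "Im tau > 0"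
  shows "br tau (- x) = - br tau x"
proof -
  have sm: "summable (\<lambda>n. (-1)^n * exp (\<i> * of_nat (n*(n+1)) * of_real pi * tau) * sinh (of_nat (2*n+1) * x))"
    using br_sums[OF tau, of x] sums_summable by blast
  have "(\<lambda>n. (-1)^n * exp (\<i> * of_nat (n*(n+1)) * of_real pi * tau) * sinh (of_nat (2*n+1) * (-x)))
      = (\<lambda>n. - ((-1)^n * exp (\<i> * of_nat (n*(n+1)) * of_real pi * tau) * sinh (of_nat (2*n+1) * x)))"
    by (simp add: fun_eq_iff)
  then show ?thesis unfolding br_def by (rule ssubst) (rule suminf_minus[OF sm])
qed




lemma has_sum_finite_sum:
  fixes f :: "'j \<Rightarrow> 'a \<Rightarrow> complex"
  assumes "finite F" "\<And>j. j \<in> F \<Longrightarrow> (f j has_sum S j) A"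
  shows "((\<lambda>n. \<Sum>j\<in>F. f j n) has_sum (\<Sum>j\<in>F. S j)) A"
  using assms
proof (induction F rule: finite_induct)
  case empty then show ?case by simp
next
  case (insert a F)
  then show ?case by (simp add: has_sum_add)
qed

lemma roots_sum:
  assumes N: "N > 0"
  shows "(\<Sum>j<N. exp (2 * of_real pi * \<i> * of_int n * of_nat j / of_nat N)) = (if int N dvd n then of_nat N else (0::complex))"
proof -
  define z where "z = exp (2 * of_real pi * \<i> * of_int n / of_nat N)"
  have zj: "exp (2 * of_real pi * \<i> * of_int n * of_nat j / of_nat N) = z ^ j" for j :: nat
    unfolding z_def exp_of_nat_mult[symmetric] by (simp add: field_simps)
  have zN: "z ^ N = 1"
  proof -
    have "z ^ N = exp (of_nat N * (2 * of_real pi * \<i> * of_int n / of_nat N))"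
      unfolding z_def exp_of_nat_mult[symmetric] ..
    also have "\<dots> = exp (2 * of_real pi * \<i> * of_int n)" using N by simp
    also have "\<dots> = 1" unfolding exp_eq_1 by simp
    finally show ?thesis .
  qed
  have z1: "z = 1 \<longleftrightarrow> int N dvd n"
  proof
    assume "z = 1"
    then obtain m :: int where m: "2 * pi * real_of_int n / real N = real_of_int (2 * m) * pi"
      unfolding z_def exp_eq_1 by auto
    then have "real_of_int n = real_of_int m * real N" using N by (simp add: field_simps)
    then have "n = m * int N" by (metis of_int_eq_iff of_int_mult of_int_of_nat_eq)
    then show "int N dvd n" by simp
  next
    assume "int N dvd n"
    then obtain m where m: "n = int N * m" by auto
    have "z = exp (2 * of_real pi * \<i> * of_int m)" unfolding z_def m using N by (simp add: mult_ac)
    also have "\<dots> = 1" unfolding exp_eq_1 by simp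
    finally show "z = 1" .
  qed
  show ?thesis
  proof (cases "int N dvd n")
    case True
    then have "z = 1" using z1 by simp
    then show ?thesis using True unfolding zj by simp
  next
    case False
    then have "z \<noteq> 1" using z1 by simp
    then show ?thesis using False unfolding zj geometric_sum[OF \<open>z \<noteq> 1\<close>] zN by simp
  qed
qed

lemma geom_int_has_sum:
  fixes r :: real
  assumes r: "0 \<le> r" "r < 1"
  shows "((\<lambda>k::int. r ^ nat \<bar>k\<bar>) has_sum ((1 + r) / (1 - r))) UNIV"
proof -
  have g0: "((\<lambda>k::nat. r ^ k) has_sum (1 / (1 - r))) UNIV"
    by (rule sums_nonneg_imp_has_sum) (use geometric_sums[of r] r in auto)
  have g1: "((\<lambda>k::nat. r ^ Suc k) has_sum (r / (1 - r))) UNIV"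
    using has_sum_cmult_right[OF g0, of r] by simp
  have hA: "((\<lambda>k::int. r ^ nat \<bar>k\<bar>) has_sum (1 / (1 - r))) (range int)"
    by (subst has_sum_reindex) (auto simp: o_def g0)
  have hB: "((\<lambda>k::int. r ^ nat \<bar>k\<bar>) has_sum (r / (1 - r))) (range (\<lambda>k. - int (Suc k)))"
  proof (subst has_sum_reindex)
    show "inj_on (\<lambda>k. - int (Suc k)) UNIV" by (auto simp: inj_on_def)
    have "((\<lambda>k::int. r ^ nat \<bar>k\<bar>) \<circ> (\<lambda>k. - int (Suc k))) = (\<lambda>k. r ^ Suc k)"
      proof -
      have "\<And>x::nat. nat (int x + 1) = Suc x" by (metis add.commute nat_int of_nat_Suc)
      then show ?thesis by (auto simp: fun_eq_iff)
    qed
    then show "(((\<lambda>k::int. r ^ nat \<bar>k\<bar>) \<circ> (\<lambda>k. - int (Suc k))) has_sum (r / (1 - r))) UNIV"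
      using g1 by simp
  qed
  have "((\<lambda>k::int. r ^ nat \<bar>k\<bar>) has_sum (1 / (1 - r) + r / (1 - r))) UNIV"
    by (subst UNIV_int_split) (rule has_sum_Un_disjoint[OF hA hB UNIV_int_split_disj])
  moreover have "1 / (1 - r) + r / (1 - r) = (1 + r) / (1 - r)" using r by (simp add: field_simps)
  ultimately show ?thesis by simp
qed

lemma aux_tt:
  fixes t :: int
  assumes "t \<ge> 2"
  shows "t \<le> t * (t - 1)"
proof -
  have "0 \<le> t * (t - 2)" using assms by simp
  then show ?thesis by (simp add: algebra_simps)
qed

lemma Th_nonzero:
  assumes tau: "Im tau > 0"
  shows "\<exists>x. Th tau x \<noteq> 0"
proof (rule ccontr)
  assume "\<not> ?thesis"
  then have Z: "\<And>x. Th tau x = 0" by auto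
  define s where "s = pi * Im tau"
  have s: "s > 0" using tau by (simp add: s_def)
  define N :: nat where "N = nat (ceiling (ln 4 / s)) + 2"
  have N2: "N \<ge> 2" by (simp add: N_def)
  have sN: "s * real N \<ge> ln 4"
  proof -
    have "ln 4 / s \<le> real N" unfolding N_def by linarith
    then show ?thesis using s by (simp add: field_simps)
  qed
  define rho where "rho = exp (- s * real N)"
  have rho0: "0 \<le> rho" by (simp add: rho_def)
  have rho4: "rho \<le> 1/4"
  proof -
    have "rho \<le> exp (- ln 4)" unfolding rho_def using sN by simp
    also have "\<dots> = 1/4" by (simp add: exp_minus)
    finally show ?thesis .
  qed
  have Npos: "N > 0" using N2 by simp
  define xj where "xj j = \<i> * of_real pi * of_nat j / of_nat N" for j :: nat
  define e where "e n j = exp (2 * of_real pi * \<i> * of_int n * of_nat j / of_nat N)" for n :: int and j :: nat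
  have trm: "exp (- xj j) * TT tau (xj j) n = cc tau n * e n j" for j n
  proof -
    have "exp (- xj j) * exp (of_int (2*n+1) * xj j) = exp (- xj j + of_int (2*n+1) * xj j)"
      by (rule mult_exp_exp)
    also have "- xj j + of_int (2*n+1) * xj j = 2 * of_real pi * \<i> * of_int n * of_nat j / of_nat N"
      unfolding xj_def using Npos by (simp add: field_simps)
    finally show ?thesis unfolding TT_def e_def by (simp add: mult_ac)
  qed
  have hj: "((\<lambda>n. cc tau n * e n j) has_sum 0) UNIV" for j
  proof -
    have "((\<lambda>n. exp (- xj j) * TT tau (xj j) n) has_sum exp (- xj j) * Th tau (xj j)) UNIV"
      unfolding Th_def by (rule has_sum_cmult_right[OF has_sum_infsum[OF TT_summable[OF tau]]])
    then show ?thesis unfolding trm Z by simp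
  qed
  have "((\<lambda>n. \<Sum>j<N. cc tau n * e n j) has_sum (\<Sum>j<N. 0)) UNIV"
    by (rule has_sum_finite_sum) (use hj in auto)
  moreover have "(\<Sum>j<N. cc tau n * e n j) = cc tau n * (if int N dvd n then of_nat N else 0)" for n
    unfolding sum_distrib_left[symmetric] e_def roots_sum[OF Npos] ..
  ultimately have h1: "((\<lambda>n. cc tau n * (if int N dvd n then of_nat N else 0)) has_sum 0) UNIV" by simp
  have h2: "((\<lambda>n. cc tau n * (if int N dvd n then of_nat N else 0)) has_sum 0) (range (\<lambda>k. int N * k))"
  proof -
    have "((\<lambda>n. cc tau n * (if int N dvd n then of_nat N else 0)) has_sum 0) (range (\<lambda>k. int N * k))
      \<longleftrightarrow> ((\<lambda>n. cc tau n * (if int N dvd n then of_nat N else 0)) has_sum 0) UNIV"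
      by (rule has_sum_cong_neutral) (auto simp: dvd_def)
    then show ?thesis using h1 by simp
  qed
  have injN: "inj (\<lambda>k. int N * k)" using Npos by (auto simp: inj_def)
  from h2 have "((\<lambda>k. cc tau (int N * k) * of_nat N) has_sum 0) UNIV"
    by (subst (asm) has_sum_reindex[OF injN]) (simp add: o_def)
  then have "((\<lambda>k. cc tau (int N * k) * of_nat N / of_nat N) has_sum 0 / of_nat N) UNIV"
    by (rule has_sum_divide_const)
  then have h3: "((\<lambda>k. cc tau (int N * k)) has_sum 0) UNIV" using Npos by simp
  define A where "A = - {0::int}"
  have bnd: "norm (cc tau (int N * k)) \<le> rho ^ nat \<bar>k\<bar>" if "k \<in> A" for k
  proof -
    have k0: "k \<noteq> 0" using that by (simp add: A_def)
    have ineqi: "int N * \<bar>k\<bar> \<le> (int N * k) * (int N * k + 1)"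
    proof (cases "k > 0")
      case True
      have "int N * k \<le> (int N * k) * (int N * k + 1)"
        using True Npos by (simp add: mult_le_cancel_left1 algebra_simps)
      then show ?thesis using True by simp
    next
      case False
      then have kn: "k < 0" using k0 by simp
      define m where "m = - k"
      have m: "m > 0" using kn by (simp add: m_def)
      have "int N \<ge> 2" using N2 by simp
      then have "int N * m \<ge> 2 * 1" using m by (intro mult_mono) auto
      then have Ai: "int N * m \<le> (int N * m) * (int N * m - 1)" by (intro aux_tt) simp
      have Be: "(int N * k) * (int N * k + 1) = (int N * m) * (int N * m - 1)"
        unfolding m_def by (simp add: algebra_simps)
      have Ce: "\<bar>k\<bar> = m" using kn by (simp add: m_def)
      show ?thesis unfolding Be Ce using Ai .
    qed
    then have "real_of_int (int N * \<bar>k\<bar>) \<le> real_of_int ((int N * k) * (int N * k + 1))"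
      by (simp only: of_int_le_iff)
    then have ineq: "real N * real_of_int \<bar>k\<bar> \<le> real_of_int ((int N * k) * (int N * k + 1))"
      by simp
    have "norm (cc tau (int N * k)) = exp (- s * real_of_int ((int N * k) * (int N * k + 1)))"
      unfolding norm_cc s_def by simp
    also have "\<dots> \<le> exp (- s * (real N * real_of_int \<bar>k\<bar>))"
      using ineq s by (simp add: mult_left_mono)
    also have "\<dots> = exp (real (nat \<bar>k\<bar>) * (- s * real N))" by (simp add: algebra_simps)
    also have "\<dots> = rho ^ nat \<bar>k\<bar>" unfolding rho_def exp_of_nat_mult ..
    finally show ?thesis .
  qed
  have gU: "((\<lambda>k::int. rho ^ nat \<bar>k\<bar>) has_sum ((1 + rho) / (1 - rho))) UNIV"
    by (rule geom_int_has_sum) (use rho0 rho4 in auto)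
  have g0: "((\<lambda>k::int. rho ^ nat \<bar>k\<bar>) has_sum 1) {0}" by (simp add: has_sum_finiteI)
  have UA: "UNIV = {0} \<union> A" "{0} \<inter> A = {}" unfolding A_def by auto
  have sgA: "(\<lambda>k::int. rho ^ nat \<bar>k\<bar>) summable_on A"
    using gU has_sum_imp_summable summable_on_subset_banach by blast
  have gA: "infsum (\<lambda>k::int. rho ^ nat \<bar>k\<bar>) A = (1 + rho) / (1 - rho) - 1"
  proof -
    have "infsum (\<lambda>k::int. rho ^ nat \<bar>k\<bar>) UNIV = infsum (\<lambda>k::int. rho ^ nat \<bar>k\<bar>) {0} + infsum (\<lambda>k::int. rho ^ nat \<bar>k\<bar>) A"
      unfolding UA(1) by (rule infsum_Un_disjoint[OF has_sum_imp_summable[OF g0] sgA UA(2)])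
    then show ?thesis using infsumI[OF gU] infsumI[OF g0] by simp
  qed
  have nA: "(\<lambda>k. norm (cc tau (int N * k))) summable_on A"
    by (rule summable_on_comparison_test[OF sgA]) (use bnd in auto)
  have sA: "(\<lambda>k. cc tau (int N * k)) summable_on A"
    by (rule abs_summable_summable) (use nA in simp)
  have "infsum (\<lambda>k. cc tau (int N * k)) UNIV = infsum (\<lambda>k. cc tau (int N * k)) {0} + infsum (\<lambda>k. cc tau (int N * k)) A"
    unfolding UA(1) by (rule infsum_Un_disjoint[OF _ sA UA(2)]) simp
  then have eq: "0 = 1 + infsum (\<lambda>k. cc tau (int N * k)) A"
    using infsumI[OF h3] by (simp add: cc_def)
  have "norm (infsum (\<lambda>k. cc tau (int N * k)) A) \<le> infsum (\<lambda>k. norm (cc tau (int N * k))) A"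
    by (rule norm_infsum_bound) (use nA in simp)
  also have "\<dots> \<le> infsum (\<lambda>k::int. rho ^ nat \<bar>k\<bar>) A"
    by (rule infsum_mono[OF nA sgA]) (use bnd in auto)
  also have "\<dots> \<le> 2/3" unfolding gA using rho0 rho4 by (simp add: field_simps)
  finally have "norm (infsum (\<lambda>k. cc tau (int N * k)) A) \<le> 2/3" .
  moreover have "infsum (\<lambda>k. cc tau (int N * k)) A = -1" using eq by (metis add.commute add_eq_0_iff)
  ultimately show False by simp
qed




lemma W4:
  assumes tau: "Im tau > 0"
  and "x + y = A1" "x - y = A2" "u + v = A3" "u - v = A4"
      "x + u = B1" "x - u = B2" "y + v = B3" "y - v = B4"
      "x + v = C1" "x - v = C2" "y + u = C3" "y - u = C4"
  shows "br tau A1 * br tau A2 * br tau A3 * br tau A4 - (br tau B1 * br tau B2 * br tau B3 * br tau B4 - br tau C1 * br tau C2 * br tau C3 * br tau C4) = 0"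
  using br_W[OF tau, of x y u v] assms(2-) by simp




lemma br_cong: "br tau x = br tau x" by (rule refl)

definition Fz :: "complex \<Rightarrow> complex \<Rightarrow> complex \<Rightarrow> complex \<Rightarrow> complex \<Rightarrow> complex \<Rightarrow> complex" where
  "Fz tau g th ze mu l = (br tau g * br tau (ze + mu)) * ((br tau (th + ze - mu) * br tau (th + g)) / (br tau (th + ze + l) * br tau th)) * br tau (2 * l)"
lemma id1_clear:
  assumes tau: "Im tau > 0"
  and nz: "br tau (a + g - ze) \<noteq> 0" "br tau g \<noteq> 0" "br tau (2 * b + g) \<noteq> 0"
  shows "(- (br tau (th) * br tau (2 * b + g) * br tau (a - b - g) * br tau (a - th - ze) * br tau (a + ze) * br tau (a + g - mu) * br tau (a + g + mu) * br tau (a + b) * br tau (2 * a + g))) + (br tau (g) * br tau (b - th - ze) * br tau (b + ze) * br tau (b + g - mu) * br tau (b + g + mu) * br tau (a - b - th) * br tau (a + b + g) * br tau (2 * a) * br tau (2 * a + g)) + (- (br tau (g) * br tau (b - mu) * br tau (b + mu) * br tau (b + g - ze) * br tau (b + g + th + ze) * br tau (a - b) * br tau (a + b + g - th) * br tau (2 * a) * br tau (2 * a + g))) + (- (br tau (g) * br tau (2 * b + g) * br tau (a - b) * br tau (a - ze) * br tau (a + th + ze) * br tau (a + g - mu) * br tau (a + g + mu) * br tau (a + b + g) * br tau (2 * a - th))) + (br tau (g + th) * br tau (2 * b + g) * br tau (a - b) * br tau (a - mu) * br tau (a + mu) * br tau (a + g - th - ze) * br tau (a + g + ze) * br tau (a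 + b + g) * br tau (2 * a)) = 0"
proof -
  have i3a: "(br tau (a + g + ze) * br tau (a + g - ze) * br tau (a - mu) * br tau (a + mu) - (br tau (2 * a + g) * br tau (g) * br tau (ze - mu) * br tau (ze + mu) - br tau (a + g - mu) * br tau (a + g + mu) * br tau (a + ze) * br tau (- (a - ze)))) = 0"
    by (rule W4[OF tau, where x="a + g" and y="ze" and u="a" and v="- mu"]) (simp_all add: field_simps)

  have i3b: "(br tau (g) * br tau (- (2 * a - th)) * br tau (a + th + ze) * br tau (a + g - ze) - (br tau (g + th) * br tau (- (2 * a)) * br tau (a + ze) * br tau (a + g - th - ze) - br tau (- (a - th - ze)) * br tau (- (a - g + ze)) * br tau (2 * a + g) * br tau (- (th)))) = 0"
    by (rule W4[OF tau, where x="- a + g / 2 + th / 2" and y="a + g / 2 - th / 2" and u="a + g / 2 + th / 2" and v="- g / 2 + th / 2 + ze"]) (simp_all add: field_simps)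

  have iV2: "(br tau (a + b + g) * br tau (- (a - b)) * br tau (a - g + ze) * br tau (a - ze) - (br tau (a + b) * br tau (- (a - b - g)) * br tau (a + ze) * br tau (a + g - ze) - br tau (b + ze) * br tau (b + g - ze) * br tau (2 * a) * br tau (g))) = 0"
    by (rule W4[OF tau, where x="b + g / 2" and y="a + g / 2" and u="a - g / 2" and v="- g / 2 + ze"]) (simp_all add: field_simps)

  have is0: "(br tau (a + g - mu) * br tau (a + g + mu) * br tau (- (g)) * br tau (2 * b + g) - (br tau (a + b + g) * br tau (a - b + g) * br tau (- (b + g + mu)) * br tau (b + g - mu) - br tau (a - b) * br tau (a + b + 2 * g) * br tau (b - mu) * br tau (- (b + mu)))) = 0"
    by (rule W4[OF tau, where x="a + g" and y="- mu" and u="b" and v="- b - g"]) (simp_all add: field_simps)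

  have is1: "(br tau (ze - mu) * br tau (ze + mu) * br tau (- (g)) * br tau (2 * b + g) - (br tau (b + ze) * br tau (- (b - ze)) * br tau (- (b + g + mu)) * br tau (b + g - mu) - br tau (- (b + g - ze)) * br tau (b + g + ze) * br tau (b - mu) * br tau (- (b + mu)))) = 0"
    by (rule W4[OF tau, where x="ze" and y="- mu" and u="b" and v="- b - g"]) (simp_all add: field_simps)

  have ic1: "(br tau (th) * br tau (a - th - ze) * br tau (a - b + g) * br tau (- (b + g - ze)) - (br tau (a - b) * br tau (b - ze) * br tau (g + th) * br tau (- (a + g - th - ze)) - br tau (a + g - ze) * br tau (- (g)) * br tau (- (b - th - ze)) * br tau (- (a - b - th)))) = 0"
    by (rule W4[OF tau, where x="a / 2 - ze / 2" and y="- a / 2 + th + ze / 2" and u="a / 2 - b + ze / 2" and v="a / 2 + g - ze / 2"]) (simp_all add: field_simps)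

  have ic2: "(br tau (th) * br tau (a - th - ze) * br tau (a + b + 2 * g) * br tau (b + ze) - (br tau (a + b + g) * br tau (- (b + g + ze)) * br tau (g + th) * br tau (- (a + g - th - ze)) - br tau (a + g - ze) * br tau (- (g)) * br tau (b + g + th + ze) * br tau (- (a + b + g - th)))) = 0"
    by (rule W4[OF tau, where x="a / 2 - ze / 2" and y="- a / 2 + th + ze / 2" and u="a / 2 + b + g + ze / 2" and v="a / 2 + g - ze / 2"]) (simp_all add: field_simps)

  have comb: "br tau (a + g - ze) * ((- (br tau (g) * br tau (2 * b + g)))) * ((- (br tau (th) * br tau (2 * b + g) * br tau (a - b - g) * br tau (a - th - ze) * br tau (a + ze) * br tau (a + g - mu) * br tau (a + g + mu) * br tau (a + b) * br tau (2 * a + g))) + (br tau (g) * br tau (b - th - ze) * br tau (b + ze) * br tau (b + g - mu) * br tau (b + g + mu) * br tau (a - b - th) * br tau (a + b + g) * br tau (2 * a) * br tau (2 * a + g)) + (- (br tau (g) * br tau (b - mu) * br tau (b + mu) * br tau (b + g - ze) * br tau (b + g + th + ze) * br tau (a - b) * br tau (a + b + g - th) * br tau (2 * a) * br tau (2 * a + g))) + (- (br tau (g) * br tau (2 * b + g) * br tau (a - b) * br tau (a - ze) * br tau (a + th + ze) * br tau (a + g - mu) * br tau (a + g + mu) * br tau (a + b + g) * br tau (2 * a - th))) + (br tau (g + th) * br tau (2 * b + g) * br tau (a - b) * br tau (a - mu) * br tau (a + mu) * br tau (a + g - th - ze) * br tau (a + g + ze) * br tau (a + b + g) * br tau (2 *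 a))) = ((- (br tau (g) * br tau (g + th) * br tau (2 * b + g) * br tau (2 * b + g) * br tau (a - b) * br tau (a + g - th - ze) * br tau (a + b + g) * br tau (2 * a)))) * (br tau (a + g + ze) * br tau (a + g - ze) * br tau (a - mu) * br tau (a + mu) - (br tau (2 * a + g) * br tau (g) * br tau (ze - mu) * br tau (ze + mu) - br tau (a + g - mu) * br tau (a + g + mu) * br tau (a + ze) * br tau (- (a - ze)))) + ((- (br tau (g) * br tau (2 * b + g) * br tau (2 * b + g) * br tau (a - b) * br tau (a - ze) * br tau (a + g - mu) * br tau (a + g + mu) * br tau (a + b + g)))) * (br tau (g) * br tau (- (2 * a - th)) * br tau (a + th + ze) * br tau (a + g - ze) - (br tau (g + th) * br tau (- (2 * a)) * br tau (a + ze) * br tau (a + g - th - ze) - br tau (- (a - th - ze)) * br tau (- (a - g + ze)) * br tau (2 * a + g) * br tau (- (th)))) + ((br tau (th) * br tau (g) * br tau (2 * b + g) * br tau (2 * b + g) * br tau (a - th - ze) * br tau (a + g - mu) * br tau (a + g + mu) * br tau (2 * a + g))) * (br tau (a + b + g) * br tau (- (a - b)) * br tau (a - g + ze) * br tau (a - ze) - (br tau (a + b) * br tau (- (a - b - g)) * br tau (a + ze) * br tau (a + g - ze) - br tau (b + ze) * br tau (b + g - ze) * br tau (2 * a) * br tau (g))) + ((br tau (th) * br tau (g) * br tau (b + ze) * br tau (b + g - ze) * br tau (2 * b + g) * br tau (a - th - ze) * br tau (2 * a) * br tau (2 * a + g))) * (br tau (a + g - mu) * br tau (a + g + mu) * br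 tau (- (g)) * br tau (2 * b + g) - (br tau (a + b + g) * br tau (a - b + g) * br tau (- (b + g + mu)) * br tau (b + g - mu) - br tau (a - b) * br tau (a + b + 2 * g) * br tau (b - mu) * br tau (- (b + mu)))) + ((br tau (g) * br tau (g + th) * br tau (2 * b + g) * br tau (a - b) * br tau (a + g - th - ze) * br tau (a + b + g) * br tau (2 * a) * br tau (2 * a + g))) * (br tau (ze - mu) * br tau (ze + mu) * br tau (- (g)) * br tau (2 * b + g) - (br tau (b + ze) * br tau (- (b - ze)) * br tau (- (b + g + mu)) * br tau (b + g - mu) - br tau (- (b + g - ze)) * br tau (b + g + ze) * br tau (b - mu) * br tau (- (b + mu)))) + ((br tau (g) * br tau (b + ze) * br tau (b + g - mu) * br tau (b + g + mu) * br tau (2 * b + g) * br tau (a + b + g) * br tau (2 * a) * br tau (2 * a + g))) * (br tau (th) * br tau (a - th - ze) * br tau (a - b + g) * br tau (- (b + g - ze)) - (br tau (a - b) * br tau (b - ze) * br tau (g + th) * br tau (- (a + g - th - ze)) - br tau (a + g - ze) * br tau (- (g)) * br tau (- (b - th - ze)) * br tau (- (a - b - th)))) + ((br tau (g) * br tau (b - mu) * br tau (b + mu) * br tau (b + g - ze) * br tau (2 * b + g) * br tau (a - b) * br tau (2 * a) * br tau (2 * a + g))) * (br tau (th) * br tau (a - th - ze) * br tau (a + b + 2 * g) * br tau (b + ze) - (br tau (a + b + g) * br tau (- (b + g + ze)) * br tau (g + th) * br tau (- (a + g - th - ze)) - br tau (a + g - ze) * br tau (- (g)) * br tau (b + g +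 th + ze) * br tau (- (a + b + g - th))))"
    unfolding br_odd[OF tau] by algebra
  also have "\<dots> = 0" unfolding i3a i3b iV2 is0 is1 ic1 ic2 by simp
  finally have "br tau (a + g - ze) * ((- (br tau (g) * br tau (2 * b + g)))) * ((- (br tau (th) * br tau (2 * b + g) * br tau (a - b - g) * br tau (a - th - ze) * br tau (a + ze) * br tau (a + g - mu) * br tau (a + g + mu) * br tau (a + b) * br tau (2 * a + g))) + (br tau (g) * br tau (b - th - ze) * br tau (b + ze) * br tau (b + g - mu) * br tau (b + g + mu) * br tau (a - b - th) * br tau (a + b + g) * br tau (2 * a) * br tau (2 * a + g)) + (- (br tau (g) * br tau (b - mu) * br tau (b + mu) * br tau (b + g - ze) * br tau (b + g + th + ze) * br tau (a - b) * br tau (a + b + g - th) * br tau (2 * a) * br tau (2 * a + g))) + (- (br tau (g) * br tau (2 * b + g) * br tau (a - b) * br tau (a - ze) * br tau (a + th + ze) * br tau (a + g - mu) * br tau (a + g + mu) * br tau (a + b + g) * br tau (2 * a - th))) + (br tau (g + th) * br tau (2 * b + g) * br tau (a - b) * br tau (a - mu) * br tau (a + mu) * br tau (a + g - th - ze) * br tau (a + g + ze) * br tau (a + b + g) * br tau (2 * a))) = 0" .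
  then show ?thesis using nz by simp
qed
lemma id1_frac:
  assumes tau: "Im tau > 0"
  and nz: "br tau (a + g - ze) \<noteq> 0" "br tau (g) \<noteq> 0" "br tau (2 * b + g) \<noteq> 0" "br tau (th) \<noteq> 0" "br tau (g - th) \<noteq> 0" "br tau (2 * a + g) \<noteq> 0" "br tau (a + th + ze) \<noteq> 0" "br tau (b + th + ze) \<noteq> 0" "br tau (a - b) \<noteq> 0" "br tau (a + b + g) \<noteq> 0"
  shows "M0 tau g th ze mu a b * Fz tau g th ze mu b + M1 tau g th ze mu a b * Fz tau g th ze mu a = 0"
proof -
  have ae0: "br tau (b - a + g) = - br tau (a - b - g)"
  proof -
    have "b - a + g = - (a - b - g)" by (simp add: algebra_simps)
    then show ?thesis by (simp only: br_odd[OF tau])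
  qed
  have ae1: "br tau (b + a) = br tau (a + b)"
  proof -
    have "b + a = a + b" by (simp add: algebra_simps)
    then show ?thesis by (simp only:)
  qed
  have ae2: "br tau (b - a) = - br tau (a - b)"
  proof -
    have "b - a = - (a - b)" by (simp add: algebra_simps)
    then show ?thesis by (simp only: br_odd[OF tau])
  qed
  have ae3: "br tau (b + a + g) = br tau (a + b + g)"
  proof -
    have "b + a + g = a + b + g" by (simp add: algebra_simps)
    then show ?thesis by (simp only:)
  qed
  have ae4: "br tau (ze - a) = - br tau (a - ze)"
  proof -
    have "ze - a = - (a - ze)" by (simp add: algebra_simps)
    then show ?thesis by (simp only: br_odd[OF tau])
  qed
  have ae5: "br tau (th - 2 * a) = - br tau (2 * a - th)"
  proof -
    have "th - 2 * a = - (2 * a - th)" by (simp add: algebra_simps)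
    then show ?thesis by (simp only: br_odd[OF tau])
  qed
  have ae6: "br tau (a - mu + g) = br tau (a + g - mu)"
  proof -
    have "a - mu + g = a + g - mu" by (simp add: algebra_simps)
    then show ?thesis by (simp only:)
  qed
  have ae7: "br tau (a + mu + g) = br tau (a + g + mu)"
  proof -
    have "a + mu + g = a + g + mu" by (simp add: algebra_simps)
    then show ?thesis by (simp only:)
  qed
  have ae8: "br tau (ze + a + g) = br tau (a + g + ze)"
  proof -
    have "ze + a + g = a + g + ze" by (simp add: algebra_simps)
    then show ?thesis by (simp only:)
  qed
  have ae9: "br tau (th + ze - a - g) = - br tau (a + g - th - ze)"
  proof -
    have "th + ze - a - g = - (a + g - th - ze)" by (simp add: algebra_simps)
    then show ?thesis by (simp only: br_odd[OF tau])
  qed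
  have ae10: "br tau (th + g) = br tau (g + th)"
  proof -
    have "th + g = g + th" by (simp add: algebra_simps)
    then show ?thesis by (simp only:)
  qed
  have ae11: "br tau (th + ze + a) = br tau (a + th + ze)"
  proof -
    have "th + ze + a = a + th + ze" by (simp add: algebra_simps)
    then show ?thesis by (simp only:)
  qed
  have ae12: "br tau (ze + a) = br tau (a + ze)"
  proof -
    have "ze + a = a + ze" by (simp add: algebra_simps)
    then show ?thesis by (simp only:)
  qed
  have ae13: "br tau (th + ze - a) = - br tau (a - th - ze)"
  proof -
    have "th + ze - a = - (a - th - ze)" by (simp add: algebra_simps)
    then show ?thesis by (simp only: br_odd[OF tau])
  qed
  have ae14: "br tau (th + b - a) = - br tau (a - b - th)"
  proof -
    have "th + b - a = - (a - b - th)" by (simp add: algebra_simps)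
    then show ?thesis by (simp only: br_odd[OF tau])
  qed
  have ae15: "br tau (ze + b) = br tau (b + ze)"
  proof -
    have "ze + b = b + ze" by (simp add: algebra_simps)
    then show ?thesis by (simp only:)
  qed
  have ae16: "br tau (th + ze - b) = - br tau (b - th - ze)"
  proof -
    have "th + ze - b = - (b - th - ze)" by (simp add: algebra_simps)
    then show ?thesis by (simp only: br_odd[OF tau])
  qed
  have ae17: "br tau (th + ze + b) = br tau (b + th + ze)"
  proof -
    have "th + ze + b = b + th + ze" by (simp add: algebra_simps)
    then show ?thesis by (simp only:)
  qed
  have ae18: "br tau (b - mu + g) = br tau (b + g - mu)"
  proof -
    have "b - mu + g = b + g - mu" by (simp add: algebra_simps)
    then show ?thesis by (simp only:)
  qed
  have ae19: "br tau (b + mu + g) = br tau (b + g + mu)"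
  proof -
    have "b + mu + g = b + g + mu" by (simp add: algebra_simps)
    then show ?thesis by (simp only:)
  qed
  have ae20: "br tau (th - g - b - a) = - br tau (a + b + g - th)"
  proof -
    have "th - g - b - a = - (a + b + g - th)" by (simp add: algebra_simps)
    then show ?thesis by (simp only: br_odd[OF tau])
  qed
  have ae21: "br tau (th - g) = - br tau (g - th)"
  proof -
    have "th - g = - (g - th)" by (simp add: algebra_simps)
    then show ?thesis by (simp only: br_odd[OF tau])
  qed
  have ae22: "br tau (ze - b - g) = - br tau (b + g - ze)"
  proof -
    have "ze - b - g = - (b + g - ze)" by (simp add: algebra_simps)
    then show ?thesis by (simp only: br_odd[OF tau])
  qed
  have ae23: "br tau (th + ze + b + g) = br tau (b + g + th + ze)"
  proof -
    have "th + ze + b + g = b + g + th + ze" by (simp add: algebra_simps)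
    then show ?thesis by (simp only:)
  qed
  have s: "(- (br tau (th) * br tau (2 * b + g) * br tau (a - b - g) * br tau (a - th - ze) * br tau (a + ze) * br tau (a + g - mu) * br tau (a + g + mu) * br tau (a + b) * br tau (2 * a + g))) + (br tau (g) * br tau (b - th - ze) * br tau (b + ze) * br tau (b + g - mu) * br tau (b + g + mu) * br tau (a - b - th) * br tau (a + b + g) * br tau (2 * a) * br tau (2 * a + g)) + (- (br tau (g) * br tau (b - mu) * br tau (b + mu) * br tau (b + g - ze) * br tau (b + g + th + ze) * br tau (a - b) * br tau (a + b + g - th) * br tau (2 * a) * br tau (2 * a + g))) + (- (br tau (g) * br tau (2 * b + g) * br tau (a - b) * br tau (a - ze) * br tau (a + th + ze) * br tau (a + g - mu) * br tau (a + g + mu) * br tau (a + b + g) * br tau (2 * a - th))) + (br tau (g + th) * br tau (2 * b + g) * br tau (a - b) * br tau (a - mu) * br tau (a + mu) * br tau (a + g - th - ze) * br tau (a + g + ze) * br tau (a + b + g) * br tau (2 * a)) = 0" by (rule id1_clear[OF tau nz(1,2,3)])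
  have e1: "M0 tau g th ze mu a b * Fz tau g th ze mu b = (br tau (g) * br tau (ze + mu) * br tau (g + th) * br tau (th + ze - mu)) / br tau (th) * br tau (2 * b) * ((- (br tau (th) * br tau (2 * b + g) * br tau (a - b - g) * br tau (a - th - ze) * br tau (a + ze) * br tau (a + g - mu) * br tau (a + g + mu) * br tau (a + b) * br tau (2 * a + g))) + (- (br tau (g) * br tau (2 * b + g) * br tau (a - b) * br tau (a - ze) * br tau (a + th + ze) * br tau (a + g - mu) * br tau (a + g + mu) * br tau (a + b + g) * br tau (2 * a - th))) + (br tau (g + th) * br tau (2 * b + g) * br tau (a - b) * br tau (a - mu) * br tau (a + mu) * br tau (a + g - th - ze) * br tau (a + g + ze) * br tau (a + b + g) * br tau (2 * a))) / (br tau (2 * a + g) * br tau (th) * br tau (a + th + ze) * br tau (b + th + ze) * (- br tau (a - b)) * br tau (a + b + g) * br tau (2 * b + g))"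
    unfolding M0_def LamAbar_def LamA_def Fz_def ae0 ae1 ae2 ae3 ae4 ae5 ae6 ae7 ae8 ae9 ae10 ae11 ae12 ae13 ae14 ae15 ae16 ae17 ae18 ae19 ae20 ae21 ae22 ae23 using nz by (simp add: field_simps cong: br_cong)
  have e2: "M1 tau g th ze mu a b * Fz tau g th ze mu a = (br tau (g) * br tau (ze + mu) * br tau (g + th) * br tau (th + ze - mu)) / br tau (th) * br tau (2 * b) * ((br tau (g) * br tau (b - th - ze) * br tau (b + ze) * br tau (b + g - mu) * br tau (b + g + mu) * br tau (a - b - th) * br tau (a + b + g) * br tau (2 * a) * br tau (2 * a + g)) + (- (br tau (g) * br tau (b - mu) * br tau (b + mu) * br tau (b + g - ze) * br tau (b + g + th + ze) * br tau (a - b) * br tau (a + b + g - th) * br tau (2 * a) * br tau (2 * a + g)))) / (br tau (2 * a + g) * br tau (th) * br tau (a + th + ze) * br tau (b + th + ze) * (- br tau (a - b)) * br tau (a + b + g) * br tau (2 * b + g))"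
    unfolding M1_def LamDt_def LamA_def Fz_def ae0 ae1 ae2 ae3 ae4 ae5 ae6 ae7 ae8 ae9 ae10 ae11 ae12 ae13 ae14 ae15 ae16 ae17 ae18 ae19 ae20 ae21 ae22 ae23 using nz by (simp add: field_simps cong: br_cong)
  have e3: "((- (br tau (th) * br tau (2 * b + g) * br tau (a - b - g) * br tau (a - th - ze) * br tau (a + ze) * br tau (a + g - mu) * br tau (a + g + mu) * br tau (a + b) * br tau (2 * a + g))) + (- (br tau (g) * br tau (2 * b + g) * br tau (a - b) * br tau (a - ze) * br tau (a + th + ze) * br tau (a + g - mu) * br tau (a + g + mu) * br tau (a + b + g) * br tau (2 * a - th))) + (br tau (g + th) * br tau (2 * b + g) * br tau (a - b) * br tau (a - mu) * br tau (a + mu) * br tau (a + g - th - ze) * br tau (a + g + ze) * br tau (a + b + g) * br tau (2 * a))) + ((br tau (g) * br tau (b - th - ze) * br tau (b + ze) * br tau (b + g - mu) * br tau (b + g + mu) * br tau (a - b - th) * br tau (a + b + g) * br tau (2 * a) * br tau (2 * a + g)) + (- (br tau (g) * br tau (b - mu) * br tau (b + mu) * br tau (b + g - ze) * br tau (b + g + th + ze) * br tau (a - b) * br tau (a + b + g - th) * br tau (2 * a) * br tau (2 * a + g)))) = (- (br tau (th) * br tau (2 * b + g) * br tau (a - b - g) * br tau (a - th - ze) * br tau (a + ze) * br tau (a + g - mu) * br tau (a + g + mu) * br tau (a + b) * br tau (2 * a + g))) + (br tau (g) * br tau (b - th - ze) * br tau (b + ze) * br tau (b + g - mu) * br tau (b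 + g + mu) * br tau (a - b - th) * br tau (a + b + g) * br tau (2 * a) * br tau (2 * a + g)) + (- (br tau (g) * br tau (b - mu) * br tau (b + mu) * br tau (b + g - ze) * br tau (b + g + th + ze) * br tau (a - b) * br tau (a + b + g - th) * br tau (2 * a) * br tau (2 * a + g))) + (- (br tau (g) * br tau (2 * b + g) * br tau (a - b) * br tau (a - ze) * br tau (a + th + ze) * br tau (a + g - mu) * br tau (a + g + mu) * br tau (a + b + g) * br tau (2 * a - th))) + (br tau (g + th) * br tau (2 * b + g) * br tau (a - b) * br tau (a - mu) * br tau (a + mu) * br tau (a + g - th - ze) * br tau (a + g + ze) * br tau (a + b + g) * br tau (2 * a))" by (simp add: algebra_simps cong: br_cong)
  have fin: "(br tau (g) * br tau (ze + mu) * br tau (g + th) * br tau (th + ze - mu)) / br tau (th) * br tau (2 * b) * ((- (br tau (th) * br tau (2 * b + g) * br tau (a - b - g) * br tau (a - th - ze) * br tau (a + ze) * br tau (a + g - mu) * br tau (a + g + mu) * br tau (a + b) * br tau (2 * a + g))) + (- (br tau (g) * br tau (2 * b + g) * br tau (a - b) * br tau (a - ze) * br tau (a + th + ze) * br tau (a + g - mu) * br tau (a + g + mu) * br tau (a + b + g) * br tau (2 * a - th))) + (br tau (g + th) * br tau (2 * b + g) * br tau (a - b) * br tau (a - mu) * br tau (a + mu) * br tau (a + g - th - ze) * br tau (a + g + ze) * br tau (a + b + g) * br tau (2 * a))) / (br tau (2 * a + g) * br tau (th) * br tau (a + th + ze) * br tau (b + th + ze) * (- br tau (a - b)) * br tau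 (a + b + g) * br tau (2 * b + g)) + (br tau (g) * br tau (ze + mu) * br tau (g + th) * br tau (th + ze - mu)) / br tau (th) * br tau (2 * b) * ((br tau (g) * br tau (b - th - ze) * br tau (b + ze) * br tau (b + g - mu) * br tau (b + g + mu) * br tau (a - b - th) * br tau (a + b + g) * br tau (2 * a) * br tau (2 * a + g)) + (- (br tau (g) * br tau (b - mu) * br tau (b + mu) * br tau (b + g - ze) * br tau (b + g + th + ze) * br tau (a - b) * br tau (a + b + g - th) * br tau (2 * a) * br tau (2 * a + g)))) / (br tau (2 * a + g) * br tau (th) * br tau (a + th + ze) * br tau (b + th + ze) * (- br tau (a - b)) * br tau (a + b + g) * br tau (2 * b + g)) = (br tau (g) * br tau (ze + mu) * br tau (g + th) * br tau (th + ze - mu)) / br tau (th) * br tau (2 * b) * ((- (br tau (th) * br tau (2 * b + g) * br tau (a - b - g) * br tau (a - th - ze) * br tau (a + ze) * br tau (a + g - mu) * br tau (a + g + mu) * br tau (a + b) * br tau (2 * a + g))) + (br tau (g) * br tau (b - th - ze) * br tau (b + ze) * br tau (b + g - mu) * br tau (b + g + mu) * br tau (a - b - th) * br tau (a + b + g) * br tau (2 * a) * br tau (2 * a + g)) + (- (br tau (g) * br tau (b - mu) * br tau (b + mu) * br tau (b + g - ze) * br tau (b + g + th + ze) * br tau (a - b) * br tau (a + b + g - th) * br tau (2 * a) * br tau (2 * a + g))) + (- (br tau (g) * br tau (2 * b + g) * br tau (a - b) * br tau (a - ze) * br tau (a + th + ze) * br tau (a + g - mu) * br tau (a + g + mu)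 * br tau (a + b + g) * br tau (2 * a - th))) + (br tau (g + th) * br tau (2 * b + g) * br tau (a - b) * br tau (a - mu) * br tau (a + mu) * br tau (a + g - th - ze) * br tau (a + g + ze) * br tau (a + b + g) * br tau (2 * a))) / (br tau (2 * a + g) * br tau (th) * br tau (a + th + ze) * br tau (b + th + ze) * (- br tau (a - b)) * br tau (a + b + g) * br tau (2 * b + g))"
    unfolding e3[symmetric] by (simp only: distrib_left add_divide_distrib)
  show ?thesis unfolding e1 e2 fin s by simp
qed
lemma id2_clear:
  assumes tau: "Im tau > 0"
  shows "(br tau (ze + mu) * br tau (th + ze - mu) * br tau (g + th) * br tau (2 * b + g)) + (br tau (b - th - ze) * br tau (b + ze) * br tau (b + g + mu) * br tau (b + g + th - mu)) + (- (br tau (b - th + mu) * br tau (b - mu) * br tau (b + g - ze) * br tau (b + g + th + ze))) = 0"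
proof -
  have iw: "(br tau (ze + mu) * br tau (th + ze - mu) * br tau (g + th) * br tau (2 * b + g) - (br tau (b + g + th + ze) * br tau (- (b + g - ze)) * br tau (- (b - mu)) * br tau (b - th + mu) - br tau (- (b - th - ze)) * br tau (b + ze) * br tau (b + g + mu) * br tau (- (b + g + th - mu)))) = 0"
    by (rule W4[OF tau, where x="th / 2 + ze" and y="- th / 2 + mu" and u="b + g + th / 2" and v="- b + th / 2"]) (simp_all add: field_simps)

  have "(br tau (ze + mu) * br tau (th + ze - mu) * br tau (g + th) * br tau (2 * b + g)) + (br tau (b - th - ze) * br tau (b + ze) * br tau (b + g + mu) * br tau (b + g + th - mu)) + (- (br tau (b - th + mu) * br tau (b - mu) * br tau (b + g - ze) * br tau (b + g + th + ze))) = (br tau (ze + mu) * br tau (th + ze - mu) * br tau (g + th) * br tau (2 * b + g) - (br tau (b + g + th + ze) * br tau (- (b + g - ze)) * br tau (- (b - mu)) * br tau (b - th + mu) - br tau (- (b - th - ze)) * br tau (b + ze) * br tau (b + g + mu) * br tau (- (b + g + th - mu))))" unfolding br_odd[OF tau] by algebra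
  also have "\<dots> = 0" by (rule iw)
  finally show ?thesis .
qed

lemma id2_frac:
  assumes tau: "Im tau > 0"
  and nz: "br tau (2 * b + g) \<noteq> 0" "br tau (b + th + ze) \<noteq> 0" "br tau (th) \<noteq> 0"
  shows "(br tau g * br tau (ze + mu)) * ((br tau (th + ze - mu) * br tau (th + g)) / (br tau (th + ze + b) * br tau th)) * br tau (2 * b) = br tau g * (br tau (2 * b) / br tau (2 * b + g)) * m1 tau g th ze mu b"
proof -
  have ae0: "br tau (th + ze - b) = - br tau (b - th - ze)"
  proof -
    have "th + ze - b = - (b - th - ze)" by (simp add: algebra_simps)
    then show ?thesis by (simp only: br_odd[OF tau])
  qed
  have ae1: "br tau (th + g + b - mu) = br tau (b + g + th - mu)"
  proof -
    have "th + g + b - mu = b + g + th - mu" by (simp add: algebra_simps)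
    then show ?thesis by (simp only:)
  qed
  have ae2: "br tau (th + ze + b) = br tau (b + th + ze)"
  proof -
    have "th + ze + b = b + th + ze" by (simp add: algebra_simps)
    then show ?thesis by (simp only:)
  qed
  have ae3: "br tau (b + mu + g) = br tau (b + g + mu)"
  proof -
    have "b + mu + g = b + g + mu" by (simp add: algebra_simps)
    then show ?thesis by (simp only:)
  qed
  have ae4: "br tau (b - ze + g) = br tau (b + g - ze)"
  proof -
    have "b - ze + g = b + g - ze" by (simp add: algebra_simps)
    then show ?thesis by (simp only:)
  qed
  have ae5: "br tau (th + ze + b + g) = br tau (b + g + th + ze)"
  proof -
    have "th + ze + b + g = b + g + th + ze" by (simp add: algebra_simps)
    then show ?thesis by (simp only:)
  qed
  have ae6: "br tau (th - b - mu) = - br tau (b - th + mu)"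
  proof -
    have "th - b - mu = - (b - th + mu)" by (simp add: algebra_simps)
    then show ?thesis by (simp only: br_odd[OF tau])
  qed
  have ae7: "br tau (th + g) = br tau (g + th)"
  proof -
    have "th + g = g + th" by (simp add: algebra_simps)
    then show ?thesis by (simp only:)
  qed
  have s: "(br tau (ze + mu) * br tau (th + ze - mu) * br tau (g + th) * br tau (2 * b + g)) + (br tau (b - th - ze) * br tau (b + ze) * br tau (b + g + mu) * br tau (b + g + th - mu)) + (- (br tau (b - th + mu) * br tau (b - mu) * br tau (b + g - ze) * br tau (b + g + th + ze))) = 0" by (rule id2_clear[OF tau])
  have e: "(br tau g * br tau (ze + mu)) * ((br tau (th + ze - mu) * br tau (th + g)) / (br tau (th + ze + b) * br tau th)) * br tau (2 * b) - br tau g * (br tau (2 * b) / br tau (2 * b + g)) * m1 tau g th ze mu b = (br tau (g) * br tau (2 * b) / (br tau (b + th + ze) * br tau (th) * br tau (2 * b + g))) * ((br tau (ze + mu) * br tau (th + ze - mu) * br tau (g + th) * br tau (2 * b + g)) + (br tau (b - th - ze) * br tau (b + ze) * br tau (b + g + mu) * br tau (b + g + th - mu)) + (- (br tau (b - th + mu) * br tau (b - mu) * br tau (b + g - ze) * br tau (b + g + th + ze))))"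
    unfolding m1_def ae0 ae1 ae2 ae3 ae4 ae5 ae6 ae7 using nz by (simp add: field_simps cong: br_cong)
  show ?thesis using e unfolding s by simp
qed

lemma id3_clear:
  assumes tau: "Im tau > 0"
  shows "(- (br tau (ze - mu) * br tau (th) * br tau (th + ze + mu) * br tau (2 * b))) + (- (br tau (b - th - ze) * br tau (b - mu) * br tau (b + ze) * br tau (b + th + mu))) + (br tau (b - th - mu) * br tau (b - ze) * br tau (b + mu) * br tau (b + th + ze)) = 0"
proof -
  have iw: "(br tau (b - mu) * br tau (b + th + mu) * br tau (b + ze) * br tau (- (b - th - ze)) - (br tau (b + th + ze) * br tau (b - ze) * br tau (b - th - mu) * br tau (- (b + mu)) - br tau (2 * b) * br tau (th) * br tau (ze - mu) * br tau (- (th + ze + mu)))) = 0"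
    by (rule W4[OF tau, where x="b + th / 2" and y="- th / 2 - mu" and u="th / 2 + ze" and v="b - th / 2"]) (simp_all add: field_simps)

  have "(- (br tau (ze - mu) * br tau (th) * br tau (th + ze + mu) * br tau (2 * b))) + (- (br tau (b - th - ze) * br tau (b - mu) * br tau (b + ze) * br tau (b + th + mu))) + (br tau (b - th - mu) * br tau (b - ze) * br tau (b + mu) * br tau (b + th + ze)) = (br tau (b - mu) * br tau (b + th + mu) * br tau (b + ze) * br tau (- (b - th - ze)) - (br tau (b + th + ze) * br tau (b - ze) * br tau (b - th - mu) * br tau (- (b + mu)) - br tau (2 * b) * br tau (th) * br tau (ze - mu) * br tau (- (th + ze + mu))))" unfolding br_odd[OF tau] by algebra
  also have "\<dots> = 0" by (rule iw)
  finally show ?thesis .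
qed

lemma id3_frac:
  assumes tau: "Im tau > 0"
  and nz: "br tau (th) \<noteq> 0" "br tau (b + th + ze) \<noteq> 0" "br tau (g + th) \<noteq> 0" "br tau (ze + mu) \<noteq> 0" "br tau (th + ze - mu) \<noteq> 0"
  shows "br tau (b - mu) * br tau (th - g) / br tau th * (br tau (ze + b) * br tau (th + ze - b) / br tau (th + ze + b)) * (br tau (th + (b + mu)) * br tau g / br tau th) + br tau (th - (b - mu)) * br tau g / br tau th * br tau (ze - b) * (br tau (b + mu) * br tau (th - g) / br tau th) = (br tau (th - g) / br tau (th + g)) * ((br tau (ze - mu) * br tau (th + ze + mu)) / (br tau (ze + mu) * br tau (th + ze - mu))) * ((br tau g * br tau (ze + mu)) * ((br tau (th + ze - mu) * br tau (th + g)) / (br tau (th + ze + b) * br tau th)) * br tau (2 * b))"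
proof -
  have ae0: "br tau (th - g) = - br tau (g - th)"
  proof -
    have "th - g = - (g - th)" by (simp add: algebra_simps)
    then show ?thesis by (simp only: br_odd[OF tau])
  qed
  have ae1: "br tau (ze + b) = br tau (b + ze)"
  proof -
    have "ze + b = b + ze" by (simp add: algebra_simps)
    then show ?thesis by (simp only:)
  qed
  have ae2: "br tau (th + ze - b) = - br tau (b - th - ze)"
  proof -
    have "th + ze - b = - (b - th - ze)" by (simp add: algebra_simps)
    then show ?thesis by (simp only: br_odd[OF tau])
  qed
  have ae3: "br tau (th + ze + b) = br tau (b + th + ze)"
  proof -
    have "th + ze + b = b + th + ze" by (simp add: algebra_simps)
    then show ?thesis by (simp only:)
  qed
  have ae4: "br tau (th + (b + mu)) = br tau (b + th + mu)"
  proof -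
    have "th + (b + mu) = b + th + mu" by (simp add: algebra_simps)
    then show ?thesis by (simp only:)
  qed
  have ae5: "br tau (th - (b - mu)) = - br tau (b - th - mu)"
  proof -
    have "th - (b - mu) = - (b - th - mu)" by (simp add: algebra_simps)
    then show ?thesis by (simp only: br_odd[OF tau])
  qed
  have ae6: "br tau (ze - b) = - br tau (b - ze)"
  proof -
    have "ze - b = - (b - ze)" by (simp add: algebra_simps)
    then show ?thesis by (simp only: br_odd[OF tau])
  qed
  have ae7: "br tau (th + g) = br tau (g + th)"
  proof -
    have "th + g = g + th" by (simp add: algebra_simps)
    then show ?thesis by (simp only:)
  qed
  have s: "(- (br tau (ze - mu) * br tau (th) * br tau (th + ze + mu) * br tau (2 * b))) + (- (br tau (b - th - ze) * br tau (b - mu) * br tau (b + ze) * br tau (b + th + mu))) + (br tau (b - th - mu) * br tau (b - ze) * br tau (b + mu) * br tau (b + th + ze)) = 0" by (rule id3_clear[OF tau])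
  have e: "br tau (b - mu) * br tau (th - g) / br tau th * (br tau (ze + b) * br tau (th + ze - b) / br tau (th + ze + b)) * (br tau (th + (b + mu)) * br tau g / br tau th) + br tau (th - (b - mu)) * br tau g / br tau th * br tau (ze - b) * (br tau (b + mu) * br tau (th - g) / br tau th) - (br tau (th - g) / br tau (th + g)) * ((br tau (ze - mu) * br tau (th + ze + mu)) / (br tau (ze + mu) * br tau (th + ze - mu))) * ((br tau g * br tau (ze + mu)) * ((br tau (th + ze - mu) * br tau (th + g)) / (br tau (th + ze + b) * br tau th)) * br tau (2 * b)) = - (br tau (g - th) * br tau (g) / (br tau (th) * br tau (th) * br tau (b + th + ze))) * ((- (br tau (ze - mu) * br tau (th) * br tau (th + ze + mu) * br tau (2 * b))) + (- (br tau (b - th - ze) * br tau (b - mu) * br tau (b + ze) * br tau (b + th + mu))) + (br tau (b - th - mu) * br tau (b - ze) * br tau (b + mu) * br tau (b + th + ze)))"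
    unfolding ae0 ae1 ae2 ae3 ae4 ae5 ae6 ae7 using nz by (simp add: field_simps cong: br_cong)
  show ?thesis using e unfolding s by simp
qed



lemma sum_UNIV_bb:
  fixes f :: "bool \<times> bool \<Rightarrow> complex"
  shows "(\<Sum>z\<in>(UNIV::(bool\<times>bool) set). f z) = f (True,True) + f (True,False) + f (False,True) + f (False,False)"
proof -
  have "(UNIV::(bool\<times>bool) set) = {(True,True),(True,False),(False,True),(False,False)}"
    by (auto simp: UNIV_bool)
  show ?thesis by (subst \<open>UNIV = _\<close>) (simp add: add.assoc)
qed

lemma PartFun_explicit:
  "PartFun tau g th ze mu b = br tau (b - mu) * br tau (th - g) / br tau th * (br tau (ze + b) * br tau (th + ze - b) / br tau (th + ze + b)) * (br tau (th + (b + mu)) * br tau g / br tau th) + br tau (th - (b - mu)) * br tau g / br tau th * br tau (ze - b) * (br tau (b + mu) * br tau (th - g) / br tau th)"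
  unfolding PartFun_def DoubleRow_def mmul_def sum_UNIV_bb T0_def Tbar0_def K0_def Rmat_def
  by (simp add: algebra_simps cong: br_cong)


lemma br_fun: "Im tau > 0 \<Longrightarrow> br tau = (\<lambda>x. Th tau x / 2)"
  by (auto simp: fun_eq_iff br_Th)

lemma br_holo:
  assumes "Im tau > 0" shows "br tau holomorphic_on UNIV"
proof -
  have "(\<lambda>x. Th tau x / 2) holomorphic_on UNIV"
    using Th_holomorphic[OF assms] by (rule holomorphic_on_divide) auto
  then show ?thesis using br_fun[OF assms] by simp
qed

lemma br_holo_comp:
  assumes "Im tau > 0" "f holomorphic_on S"
  shows "(\<lambda>x. br tau (f x)) holomorphic_on S"
  using holomorphic_on_compose[OF assms(2) holomorphic_on_subset[OF br_holo[OF assms(1)]]]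
  by (simp add: o_def)

lemma br_cont_comp:
  assumes "Im tau > 0" "continuous_on S f"
  shows "continuous_on S (\<lambda>x. br tau (f x))"
  using continuous_on_compose[OF assms(2) continuous_on_subset[OF holomorphic_on_imp_continuous_on[OF br_holo[OF assms(1)]]]]
  by (simp add: o_def)

lemma br_zero:
  assumes "Im tau > 0" shows "br tau 0 = 0"
proof -
  have "br tau (- 0) = - br tau 0" by (rule br_odd[OF assms])
  then show ?thesis by simp
qed

lemma br_nonzero: "Im tau > 0 \<Longrightarrow> \<exists>x. br tau x \<noteq> 0"
proof -
  assume tau: "Im tau > 0"
  obtain x where "Th tau x \<noteq> 0" using Th_nonzero[OF tau] by blast
  then have "br tau x \<noteq> 0" by (simp add: br_Th[OF tau])
  then show ?thesis by blast
qed

lemma zeros_nolimpt: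
  assumes "f holomorphic_on UNIV" "f z0 \<noteq> 0"
  shows "\<not> z islimpt {x. f x = 0}"
proof
  assume "z islimpt {x. f x = 0}"
  have "f z0 = 0"
    by (rule analytic_continuation[OF assms(1) open_UNIV connected_UNIV subset_UNIV UNIV_I \<open>z islimpt _\<close>, where w=z0]) simp_all
  with assms(2) show False by simp
qed

lemma br_affine_nolimpt:
  assumes tau: "Im tau > 0" and h: "\<And>x. h x = c * x + d" and c: "c \<noteq> 0"
  shows "\<not> z islimpt {x. br tau (h x) = 0}"
proof -
  obtain x0 where x0: "br tau x0 \<noteq> 0" using br_nonzero[OF tau] by blast
  have "(\<lambda>x. br tau (h x)) holomorphic_on UNIV"
    unfolding h by (intro br_holo_comp[OF tau] holomorphic_intros)
  moreover have "br tau (h ((x0 - d) / c)) \<noteq> 0" unfolding h using c x0 by simp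
  ultimately show ?thesis by (rule zeros_nolimpt)
qed

lemma nolimpt_Un:
  "\<not> z islimpt A \<Longrightarrow> \<not> z islimpt B \<Longrightarrow> \<not> z islimpt (A \<union> B)"
  by (simp add: islimpt_Un)

lemma nolimpt_shift:
  fixes E :: "complex set"
  assumes "\<forall>z. \<not> z islimpt E"
  shows "\<not> z islimpt {l. l + c \<in> E}"
proof
  assume "z islimpt {l. l + c \<in> E}"
  then have "z + c islimpt E"
    unfolding islimpt_approachable
  proof (intro allI impI)
    fix e :: real assume "e > 0" "\<forall>e>0. \<exists>x'\<in>{l. l + c \<in> E}. x' \<noteq> z \<and> dist x' z < e"
    then obtain x' where "x' + c \<in> E" "x' \<noteq> z" "dist x' z < e" by auto
    then show "\<exists>x'\<in>E. x' \<noteq> z + c \<and> dist x' (z + c) < e"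
      by (intro bexI[of _ "x' + c"]) (auto simp: dist_norm)
  qed
  with assms show False by auto
qed

lemma exists_not_in:
  fixes B :: "complex set"
  assumes "\<not> 0 islimpt B"
  shows "\<exists>x. x \<notin> B"
proof (rule ccontr)
  assume "\<not> ?thesis"
  then have "B = UNIV" by auto
  with assms show False by simp
qed





theorem lemma3p6:
  fixes tau :: complex
  assumes "Im tau > 0"
  shows "\<exists>P :: (complex \<times> complex \<times> complex \<times> complex) set.
    closed P \<and> interior P = {} \<and>
    (\<forall>g th ze mu. (g, th, ze, mu) \<notin> P \<longrightarrow>
      (\<forall>Z :: complex \<Rightarrow> complex.
         (\<exists>E :: complex set. (\<forall>z. \<not> z islimpt E) \<and>
            (\<forall>l0 l1. l0 \<notin> E \<longrightarrow> l1 \<notin> E \<longrightarrow> l1 - l0 \<notin> E \<longrightarrow> l1 + l0 \<notin> E \<longrightarrow>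
               M0 tau g th ze mu l0 l1 * Z l1 + M1 tau g th ze mu l0 l1 * Z l0 = 0))
         \<longrightarrow>
         (\<exists>\<Omega> :: complex. \<exists>S :: complex set. (\<forall>z. \<not> z islimpt S) \<and>
            (\<forall>l. l \<notin> S \<longrightarrow>
               Z l = \<Omega> * (br tau g * br tau (ze + mu))
                       * ((br tau (th + ze - mu) * br tau (th + g))
                          / (br tau (th + ze + l) * br tau th)) * br tau (2 * l)
             \<and> \<Omega> * (br tau g * br tau (ze + mu))
                       * ((br tau (th + ze - mu) * br tau (th + g))
                          / (br tau (th + ze + l) * br tau th)) * br tau (2 * l)
               = \<Omega> * br tau g * (br tau (2 * l) / br tau (2 * l + g)) * m1 tau g th ze mu l) \<and>
            (\<Omega> = (br tau (th - g) / br tau (th + g))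
                  * ((br tau (ze - mu) * br tau (th + ze + mu))
                     / (br tau (ze + mu) * br tau (th + ze - mu)))
             \<longrightarrow> (\<forall>l. l \<notin> S \<longrightarrow> Z l = PartFun tau g th ze mu l)))))"
proof -
  note tau = assms
  define Q where "Q p = br tau (fst p) * br tau (fst (snd p)) * br tau (fst p - fst (snd p))
     * br tau (fst (snd (snd p)) + snd (snd (snd p))) * br tau (fst (snd p) + fst (snd (snd p)) - snd (snd (snd p)))
     * br tau (fst p + fst (snd p))" for p :: "complex \<times> complex \<times> complex \<times> complex"
  define P where "P = {p. Q p = 0}"
  have closedP: "closed P"
    unfolding P_def
  proof (rule closed_Collect_eq)
    show "continuous_on UNIV Q" unfolding Q_def
      by (intro continuous_on_mult br_cont_comp[OF tau] continuous_intros)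
  qed (rule continuous_on_const)
  have intP: "interior P = {}"
  proof (rule ccontr)
    assume "interior P \<noteq> {}"
    then obtain p where p: "p \<in> interior P" by auto
    define gam where "gam t = (fst p + t, fst (snd p) + 10 * t, fst (snd (snd p)) + 100 * t, snd (snd (snd p)) + 1000 * t)" for t :: complex
    have cg: "continuous_on UNIV gam" unfolding gam_def by (intro continuous_intros)
    have op: "open (gam -` interior P)" by (rule open_vimage[OF open_interior cg])
    have "0 \<in> gam -` interior P" using p by (simp add: gam_def)
    then obtain d where d: "d > 0" "ball 0 d \<subseteq> gam -` interior P"
      using op open_contains_ball by blast
    define Zs where "Zs = {t. br tau (fst p + t) = 0} \<union> {t. br tau (fst (snd p) + 10 * t) = 0}
      \<union> {t. br tau (fst p + t - (fst (snd p) + 10 * t)) = 0}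
      \<union> {t. br tau (fst (snd (snd p)) + 100 * t + (snd (snd (snd p)) + 1000 * t)) = 0}
      \<union> {t. br tau (fst (snd p) + 10 * t + (fst (snd (snd p)) + 100 * t) - (snd (snd (snd p)) + 1000 * t)) = 0}
      \<union> {t. br tau (fst p + t + (fst (snd p) + 10 * t)) = 0}"
    have sub: "ball 0 d \<subseteq> Zs"
    proof
      fix t :: complex assume "t \<in> ball 0 d"
      then have "gam t \<in> P" using d interior_subset by blast
      then show "t \<in> Zs" unfolding P_def Q_def Zs_def gam_def by auto
    qed
    have z1: "\<not> 0 islimpt {t. br tau (fst p + t) = 0}"
      by (rule br_affine_nolimpt[OF tau, where c=1 and d="fst p"]) (simp_all add: algebra_simps)
    have z2: "\<not> 0 islimpt {t. br tau (fst (snd p) + 10 * t) = 0}"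
      by (rule br_affine_nolimpt[OF tau, where c=10 and d="fst (snd p)"]) (simp_all add: algebra_simps)
    have z3: "\<not> 0 islimpt {t. br tau (fst p + t - (fst (snd p) + 10 * t)) = 0}"
      by (rule br_affine_nolimpt[OF tau, where c="-9" and d="fst p - fst (snd p)"]) (simp_all add: algebra_simps)
    have z4: "\<not> 0 islimpt {t. br tau (fst (snd (snd p)) + 100 * t + (snd (snd (snd p)) + 1000 * t)) = 0}"
      by (rule br_affine_nolimpt[OF tau, where c=1100 and d="fst (snd (snd p)) + snd (snd (snd p))"]) (simp_all add: algebra_simps)
    have z5: "\<not> 0 islimpt {t. br tau (fst (snd p) + 10 * t + (fst (snd (snd p)) + 100 * t) - (snd (snd (snd p)) + 1000 * t)) = 0}"
      by (rule br_affine_nolimpt[OF tau, where c="-890" and d="fst (snd p) + fst (snd (snd p)) - snd (snd (snd p))"]) (simp_all add: algebra_simps)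
    have z6: "\<not> 0 islimpt {t. br tau (fst p + t + (fst (snd p) + 10 * t)) = 0}"
      by (rule br_affine_nolimpt[OF tau, where c=11 and d="fst p + fst (snd p)"]) (simp_all add: algebra_simps)
    have "\<not> 0 islimpt Zs"
      unfolding Zs_def by (intro nolimpt_Un z1 z2 z3 z4 z5 z6)
    moreover have "0 islimpt Zs"
      by (rule islimpt_subset[OF _ sub]) (use d in \<open>simp add: islimpt_ball\<close>)
    ultimately show False by simp
  qed
  show ?thesis
  proof (intro exI[of _ P] conjI closedP intP allI impI)
    fix g th ze mu Z
    assume gP: "(g, th, ze, mu) \<notin> P"
    then have nzg: "br tau g \<noteq> 0" and nzth: "br tau th \<noteq> 0" and nzgth: "br tau (g - th) \<noteq> 0"
      and nzzm: "br tau (ze + mu) \<noteq> 0" and nztzm: "br tau (th + ze - mu) \<noteq> 0" and nzgt: "br tau (g + th) \<noteq> 0"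
      unfolding P_def Q_def by auto
    have nztg: "br tau (th + g) \<noteq> 0" using nzgt by (simp add: add.commute)
    assume "\<exists>E :: complex set. (\<forall>z. \<not> z islimpt E) \<and>
            (\<forall>l0 l1. l0 \<notin> E \<longrightarrow> l1 \<notin> E \<longrightarrow> l1 - l0 \<notin> E \<longrightarrow> l1 + l0 \<notin> E \<longrightarrow>
               M0 tau g th ze mu l0 l1 * Z l1 + M1 tau g th ze mu l0 l1 * Z l0 = 0)"
    then obtain E where nE: "\<forall>z. \<not> z islimpt E" and hyp: "\<And>l0 l1. l0 \<notin> E \<Longrightarrow> l1 \<notin> E \<Longrightarrow> l1 - l0 \<notin> E \<Longrightarrow> l1 + l0 \<notin> E \<Longrightarrow>
               M0 tau g th ze mu l0 l1 * Z l1 + M1 tau g th ze mu l0 l1 * Z l0 = 0" by blast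
    define Ba where "Ba = E \<union> {a. br tau (a + g - ze) = 0} \<union> {a. br tau (2 * a + g) = 0} \<union> {a. br tau (a + th + ze) = 0}
       \<union> {a. br tau (2 * a) = 0} \<union> {a. br tau (ze + a) = 0} \<union> {a. br tau (th + ze - a) = 0}
       \<union> {a. br tau (th + ze + a) = 0} \<union> {a. br tau (a - mu + g) = 0} \<union> {a. br tau (a + mu + g) = 0}"
    have ba0: "\<not> 0 islimpt {a. br tau (a + g - ze) = 0}"
      by (rule br_affine_nolimpt[OF tau, where c="1" and d="g - ze"]) (simp_all add: algebra_simps)
    have ba1: "\<not> 0 islimpt {a. br tau (2 * a + g) = 0}"
      by (rule br_affine_nolimpt[OF tau, where c="2" and d="g"]) (simp_all add: algebra_simps)
    have ba2: "\<not> 0 islimpt {a. br tau (a + th + ze) = 0}"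
      by (rule br_affine_nolimpt[OF tau, where c="1" and d="th + ze"]) (simp_all add: algebra_simps)
    have ba3: "\<not> 0 islimpt {a. br tau (2 * a) = 0}"
      by (rule br_affine_nolimpt[OF tau, where c="2" and d="0"]) (simp_all add: algebra_simps)
    have ba4: "\<not> 0 islimpt {a. br tau (ze + a) = 0}"
      by (rule br_affine_nolimpt[OF tau, where c="1" and d="ze"]) (simp_all add: algebra_simps)
    have ba5: "\<not> 0 islimpt {a. br tau (th + ze - a) = 0}"
      by (rule br_affine_nolimpt[OF tau, where c="-1" and d="th + ze"]) (simp_all add: algebra_simps)
    have ba6: "\<not> 0 islimpt {a. br tau (th + ze + a) = 0}"
      by (rule br_affine_nolimpt[OF tau, where c="1" and d="th + ze"]) (simp_all add: algebra_simps)
    have ba7: "\<not> 0 islimpt {a. br tau (a - mu + g) = 0}"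
      by (rule br_affine_nolimpt[OF tau, where c="1" and d="g - mu"]) (simp_all add: algebra_simps)
    have ba8: "\<not> 0 islimpt {a. br tau (a + mu + g) = 0}"
      by (rule br_affine_nolimpt[OF tau, where c="1" and d="mu + g"]) (simp_all add: algebra_simps)
    have "\<not> 0 islimpt Ba"
      unfolding Ba_def by (intro nolimpt_Un ba0 ba1 ba2 ba3 ba4 ba5 ba6 ba7 ba8) (use nE in auto)
    then obtain a0 where "a0 \<notin> Ba" using exists_not_in by blast
    then have a0E: "a0 \<notin> E" and na1: "br tau (a0 + g - ze) \<noteq> 0" and na2: "br tau (2 * a0 + g) \<noteq> 0"
      and na3: "br tau (a0 + th + ze) \<noteq> 0" and na4: "br tau (2 * a0) \<noteq> 0" and na5: "br tau (ze + a0) \<noteq> 0"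
      and na6: "br tau (th + ze - a0) \<noteq> 0" and na7: "br tau (th + ze + a0) \<noteq> 0"
      and na8: "br tau (a0 - mu + g) \<noteq> 0" and na9: "br tau (a0 + mu + g) \<noteq> 0"
      unfolding Ba_def by auto
    have Fa0: "Fz tau g th ze mu a0 \<noteq> 0"
      unfolding Fz_def using nzg nzzm nztzm nztg na7 nzth na4 by simp
    define \<Omega> where "\<Omega> = Z a0 / Fz tau g th ze mu a0"
    have OF: "\<Omega> * Fz tau g th ze mu a0 = Z a0" unfolding \<Omega>_def using Fa0 by simp
    have LA: "LamA tau g th ze mu a0 \<noteq> 0"
      unfolding LamA_def using na5 na6 na7 na8 na9 by simp
    define Nf where "Nf l = LamAbar tau g th ze mu a0 * (br tau (l - a0) * br tau (l + a0 + g))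
        - LamA tau g th ze mu a0 * (br tau (l - a0 + g) * br tau (l + a0))" for l
    have Nf_holo: "Nf holomorphic_on UNIV"
      unfolding Nf_def by (intro holomorphic_intros br_holo_comp[OF tau])
    have Nf_a0: "Nf a0 \<noteq> 0"
    proof -
      have "Nf a0 = - (LamA tau g th ze mu a0 * (br tau g * br tau (2 * a0)))"
      proof -
        have e1: "a0 - a0 = 0" by simp
        have e2: "a0 - a0 + g = g" by simp
        have e3: "a0 + a0 = 2 * a0" by simp
        show ?thesis unfolding Nf_def e1 e2 e3 br_zero[OF tau] by simp
      qed
      then show ?thesis using LA nzg na4 by simp
    qed
    define S where "S = E \<union> {l. l + (- a0) \<in> E} \<union> {l. l + a0 \<in> E} \<union> {l. Nf l = 0}
       \<union> {l. br tau (2 * l + g) = 0} \<union> {l. br tau (l + th + ze) = 0} \<union> {l. br tau (a0 - l) = 0}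
       \<union> {l. br tau (a0 + l + g) = 0} \<union> {l. br tau (th + ze + l) = 0} \<union> {l. br tau (l - a0) = 0}
       \<union> {l. br tau (l + a0 + g) = 0}"
    have Sd: "\<forall>z. \<not> z islimpt S"
    proof
      fix z
    have sl0: "\<not> z islimpt {l. br tau (2 * l + g) = 0}"
      by (rule br_affine_nolimpt[OF tau, where c="2" and d="g"]) (simp_all add: algebra_simps)
    have sl1: "\<not> z islimpt {l. br tau (l + th + ze) = 0}"
      by (rule br_affine_nolimpt[OF tau, where c="1" and d="th + ze"]) (simp_all add: algebra_simps)
    have sl2: "\<not> z islimpt {l. br tau (a0 - l) = 0}"
      by (rule br_affine_nolimpt[OF tau, where c="-1" and d="a0"]) (simp_all add: algebra_simps)
    have sl3: "\<not> z islimpt {l. br tau (a0 + l + g) = 0}"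
      by (rule br_affine_nolimpt[OF tau, where c="1" and d="a0 + g"]) (simp_all add: algebra_simps)
    have sl4: "\<not> z islimpt {l. br tau (th + ze + l) = 0}"
      by (rule br_affine_nolimpt[OF tau, where c="1" and d="th + ze"]) (simp_all add: algebra_simps)
    have sl5: "\<not> z islimpt {l. br tau (l - a0) = 0}"
      by (rule br_affine_nolimpt[OF tau, where c="1" and d="- a0"]) (simp_all add: algebra_simps)
    have sl6: "\<not> z islimpt {l. br tau (l + a0 + g) = 0}"
      by (rule br_affine_nolimpt[OF tau, where c="1" and d="a0 + g"]) (simp_all add: algebra_simps)
      show "\<not> z islimpt S"
        unfolding S_def by (intro nolimpt_Un nolimpt_shift[OF nE] zeros_nolimpt[OF Nf_holo Nf_a0] sl0 sl1 sl2 sl3 sl4 sl5 sl6) (use nE in auto)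
    qed
    show "\<exists>\<Omega> S. (\<forall>z. \<not> z islimpt S) \<and>
            (\<forall>l. l \<notin> S \<longrightarrow>
               Z l = \<Omega> * (br tau g * br tau (ze + mu))
                       * ((br tau (th + ze - mu) * br tau (th + g))
                          / (br tau (th + ze + l) * br tau th)) * br tau (2 * l)
             \<and> \<Omega> * (br tau g * br tau (ze + mu))
                       * ((br tau (th + ze - mu) * br tau (th + g))
                          / (br tau (th + ze + l) * br tau th)) * br tau (2 * l)
               = \<Omega> * br tau g * (br tau (2 * l) / br tau (2 * l + g)) * m1 tau g th ze mu l) \<and>
            (\<Omega> = (br tau (th - g) / br tau (th + g))
                  * ((br tau (ze - mu) * br tau (th + ze + mu))
                     / (br tau (ze + mu) * br tau (th + ze - mu)))
             \<longrightarrow> (\<forall>l. l \<notin> S \<longrightarrow> Z l = PartFun tau g th ze mu l))"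
    proof (intro exI[of _ \<Omega>] exI[of _ S] conjI Sd allI impI)
      fix l assume lS: "l \<notin> S"
      have lE: "l \<notin> E" "l - a0 \<notin> E" "l + a0 \<notin> E" using lS unfolding S_def by auto
      have nl: "Nf l \<noteq> 0" "br tau (2 * l + g) \<noteq> 0" "br tau (l + th + ze) \<noteq> 0" "br tau (a0 - l) \<noteq> 0"
        "br tau (a0 + l + g) \<noteq> 0" "br tau (th + ze + l) \<noteq> 0" "br tau (l - a0) \<noteq> 0" "br tau (l + a0 + g) \<noteq> 0"
        using lS unfolding S_def by auto
      have h1: "M0 tau g th ze mu a0 l * Z l + M1 tau g th ze mu a0 l * Z a0 = 0"
        by (rule hyp[OF a0E lE])
      have h2: "M0 tau g th ze mu a0 l * Fz tau g th ze mu l + M1 tau g th ze mu a0 l * Fz tau g th ze mu a0 = 0"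
        by (rule id1_frac[OF tau, where a=a0 and b=l]) (use na1 nzg nl nzth nzgth na2 na3 in auto)
      have M0N: "M0 tau g th ze mu a0 l * (br tau (l - a0) * br tau (l + a0 + g)) = Nf l"
        unfolding M0_def Nf_def using nl by (simp add: field_simps cong: br_cong)
      have M0nz: "M0 tau g th ze mu a0 l \<noteq> 0" using M0N nl by auto
      have "M0 tau g th ze mu a0 l * (Z l - \<Omega> * Fz tau g th ze mu l) = 0"
      proof -
        have "M0 tau g th ze mu a0 l * (Z l - \<Omega> * Fz tau g th ze mu l)
            = (M0 tau g th ze mu a0 l * Z l + M1 tau g th ze mu a0 l * Z a0)
              - \<Omega> * (M0 tau g th ze mu a0 l * Fz tau g th ze mu l + M1 tau g th ze mu a0 l * Fz tau g th ze mu a0)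
              + M1 tau g th ze mu a0 l * (\<Omega> * Fz tau g th ze mu a0 - Z a0)"
          by (simp add: algebra_simps)
        also have "\<dots> = 0" unfolding h1 h2 OF by simp
        finally show ?thesis .
      qed
      then have ZF: "Z l = \<Omega> * Fz tau g th ze mu l" using M0nz by simp
      then show "Z l = \<Omega> * (br tau g * br tau (ze + mu))
                       * ((br tau (th + ze - mu) * br tau (th + g))
                          / (br tau (th + ze + l) * br tau th)) * br tau (2 * l)"
        unfolding Fz_def by (simp only: mult.assoc)
      have i2: "(br tau g * br tau (ze + mu)) * ((br tau (th + ze - mu) * br tau (th + g)) / (br tau (th + ze + l) * br tau th)) * br tau (2 * l)
          = br tau g * (br tau (2 * l) / br tau (2 * l + g)) * m1 tau g th ze mu l"
        by (rule id2_frac[OF tau, where b=l]) (use nl nzth in auto)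
      show "\<Omega> * (br tau g * br tau (ze + mu))
                       * ((br tau (th + ze - mu) * br tau (th + g))
                          / (br tau (th + ze + l) * br tau th)) * br tau (2 * l)
               = \<Omega> * br tau g * (br tau (2 * l) / br tau (2 * l + g)) * m1 tau g th ze mu l"
        using arg_cong[OF i2, of "\<lambda>t. \<Omega> * t"] by (simp only: mult.assoc)
    next
      assume Om: "\<Omega> = (br tau (th - g) / br tau (th + g))
                  * ((br tau (ze - mu) * br tau (th + ze + mu))
                     / (br tau (ze + mu) * br tau (th + ze - mu)))"
      fix l assume lS: "l \<notin> S"
      have lE: "l \<notin> E" "l - a0 \<notin> E" "l + a0 \<notin> E" using lS unfolding S_def by auto
      have nl: "Nf l \<noteq> 0" "br tau (2 * l + g) \<noteq> 0" "br tau (l + th + ze) \<noteq> 0" "br tau (a0 - l) \<noteq> 0"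
        "br tau (a0 + l + g) \<noteq> 0" "br tau (th + ze + l) \<noteq> 0" "br tau (l - a0) \<noteq> 0" "br tau (l + a0 + g) \<noteq> 0"
        using lS unfolding S_def by auto
      have h1: "M0 tau g th ze mu a0 l * Z l + M1 tau g th ze mu a0 l * Z a0 = 0"
        by (rule hyp[OF a0E lE])
      have h2: "M0 tau g th ze mu a0 l * Fz tau g th ze mu l + M1 tau g th ze mu a0 l * Fz tau g th ze mu a0 = 0"
        by (rule id1_frac[OF tau, where a=a0 and b=l]) (use na1 nzg nl nzth nzgth na2 na3 in auto)
      have M0N: "M0 tau g th ze mu a0 l * (br tau (l - a0) * br tau (l + a0 + g)) = Nf l"
        unfolding M0_def Nf_def using nl by (simp add: field_simps cong: br_cong)
      have M0nz: "M0 tau g th ze mu a0 l \<noteq> 0" using M0N nl by auto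
      have "M0 tau g th ze mu a0 l * (Z l - \<Omega> * Fz tau g th ze mu l) = 0"
      proof -
        have "M0 tau g th ze mu a0 l * (Z l - \<Omega> * Fz tau g th ze mu l)
            = (M0 tau g th ze mu a0 l * Z l + M1 tau g th ze mu a0 l * Z a0)
              - \<Omega> * (M0 tau g th ze mu a0 l * Fz tau g th ze mu l + M1 tau g th ze mu a0 l * Fz tau g th ze mu a0)
              + M1 tau g th ze mu a0 l * (\<Omega> * Fz tau g th ze mu a0 - Z a0)"
          by (simp add: algebra_simps)
        also have "\<dots> = 0" unfolding h1 h2 OF by simp
        finally show ?thesis .
      qed
      then have ZF: "Z l = \<Omega> * Fz tau g th ze mu l" using M0nz by simp
      have i3: "br tau (l - mu) * br tau (th - g) / br tau th * (br tau (ze + l) * br tau (th + ze - l) / br tau (th + ze + l)) * (br tau (th + (l + mu)) * br tau g / br tau th) + br tau (th - (l - mu)) * br tau g / br tau th * br tau (ze - l) * (br tau (l + mu) * br tau (th - g) / br tau th)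
         = (br tau (th - g) / br tau (th + g)) * ((br tau (ze - mu) * br tau (th + ze + mu)) / (br tau (ze + mu) * br tau (th + ze - mu))) * ((br tau g * br tau (ze + mu)) * ((br tau (th + ze - mu) * br tau (th + g)) / (br tau (th + ze + l) * br tau th)) * br tau (2 * l))"
        by (rule id3_frac[OF tau, where b=l]) (use nl nzth nzgt nzzm nztzm in auto)
      show "Z l = PartFun tau g th ze mu l"
        unfolding ZF PartFun_explicit i3 Om Fz_def ..
    qed
  qed
qed


end
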